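(* Let $\{G_i,f_i\}_{i=1}^\infty$ be a uniform tower such that $G_i$ is $d_i$-regular for each $i\in\mathbb{N}$. Then $\{A(G_i)/d_i\}_{i=1}^\infty$ is an action convergent sequence of $P$-operators and $\lim_{i\to\infty}d_M(A(G_i)/d_i,A)=0$, where $A$ is the inverse limit of the tower.
   Context: For a finite graph $G$ on $[n]$, $A(G)$ is the operator on functions $v:[n]\to\mathbb{R}$ (with the uniform probability measure on $[n]$) given by $(vA(G))(i)=\sum_{(j,i)\in E(G)}v(j)$. A map $f:V(G_2)\to V(G_1)$ between finite graphs is $(a,b)$-uniform if it is a graph homomorphism, $|f^{-1}(v)|=a$ for every $v\in V(G_1)$, and for every $v\in V(G_2)$ and every neighbor $w$ of $f(v)$ exactly $b$ neighbors of $v$ are mapped to $w$. A uniform tower is a sequence of finite graphs $G_i$ with maps $f_i:V(G_{i+1})\to V(G_i)$ that are $(a_i,b_i)$-uniform. Let $V$ be the inverse limit of $(V(G_i),f_i)$ (sequences $(x_1,x_2,\dots)$ with $f_i(x_{i+1})=x_i$), $\pi_i:V\to V(G_i)$ the projections, and $\mu$ the unique Borel probability measure on $V$ whose pushforward under each $\pi_i$ is uniform. For $x\in V$ let $N(x)\subseteq V$ be the inverse limit of the neighbor sets of $\pi_i(x)$ in $G_i$ and $\nu_x$ the uniform measure on $N(x)$. The inverse limit of the tower is the operator $A$ on $L^\infty(V,\mu)$ given by $(fA)(x)=\int_Vf\,d\nu_x$. For an operator $B$ on a probability space $\Omega$, $\mathcal{S}_k(B)$ is the set of joint distributions on $\mathbb{R}^{2k}$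 of $(v_1,\dots,v_k,v_1B,\dots,v_kB)$ with $v_i$ measurable $\Omega\to[-1,1]$; $d_M(B,C)=\sum_k2^{-k}d_H(\mathcal{S}_k(B),\mathcal{S}_k(C))$ with $d_H$ the Hausdorff distance induced by the Lévy–Prokhorov metric; action convergence means each $\{\mathcal{S}_k\}$ is $d_H$-Cauchy. *)

theory Defs
  imports "HOL-Probability.Probability"
begin

definition fin_graph :: "nat \<Rightarrow> (nat \<Rightarrow> nat \<Rightarrow> bool) \<Rightarrow> bool" where
  "fin_graph n E \<longleftrightarrow> (\<forall>i j. E i j \<longrightarrow> i < n \<and> j < n) \<and> (\<forall>i j. E i j \<longrightarrow> E j i) \<and> (\<forall>i. \<not> E i i)"

definition nbrs :: "nat \<Rightarrow> (nat \<Rightarrow> nat \<Rightarrow> bool) \<Rightarrow> nat \<Rightarrow> nat set" where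
  "nbrs n E v = {w. w < n \<and> E v w}"

definition regular :: "nat \<Rightarrow> (nat \<Rightarrow> nat \<Rightarrow> bool) \<Rightarrow> nat \<Rightarrow> bool" where
  "regular n E d \<longleftrightarrow> (\<forall>v<n. card (nbrs n E v) = d)"

definition uniform_map ::
  "nat \<Rightarrow> (nat \<Rightarrow> nat \<Rightarrow> bool) \<Rightarrow> nat \<Rightarrow> (nat \<Rightarrow> nat \<Rightarrow> bool) \<Rightarrow> (nat \<Rightarrow> nat) \<Rightarrow> nat \<Rightarrow> nat \<Rightarrow> bool" where
  "uniform_map n1 E1 n2 E2 f a b \<longleftrightarrow>
     (\<forall>v<n2. f v < n1) \<and>
     (\<forall>v w. E2 v w \<longrightarrow> E1 (f v) (f w)) \<and>
     (\<forall>v<n1. card {u. u < n2 \<and> f u = v} = a) \<and>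
     (\<forall>v<n2. \<forall>w \<in> nbrs n1 E1 (f v). card {u \<in> nbrs n2 E2 v. f u = w} = b)"

text \<open>Normalised adjacency operator A(G)/d: (v A(G))(i) = sum over edges (j,i) of v(j).\<close>
definition adj_op :: "nat \<Rightarrow> (nat \<Rightarrow> nat \<Rightarrow> bool) \<Rightarrow> nat \<Rightarrow> (nat \<Rightarrow> real) \<Rightarrow> (nat \<Rightarrow> real)" where
  "adj_op n E d v = (\<lambda>i. (\<Sum>j\<in>{j. j < n \<and> E j i}. v j) / real d)"

definition inv_limit :: "(nat \<Rightarrow> nat) \<Rightarrow> (nat \<Rightarrow> nat \<Rightarrow> nat) \<Rightarrow> (nat \<Rightarrow> nat) set" where
  "inv_limit n f = {x. \<forall>i. x i < n i \<and> f i (x (Suc i)) = x i}"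

definition inv_limit_nbrs ::
  "(nat \<Rightarrow> nat) \<Rightarrow> (nat \<Rightarrow> nat \<Rightarrow> nat \<Rightarrow> bool) \<Rightarrow> (nat \<Rightarrow> nat \<Rightarrow> nat) \<Rightarrow> (nat \<Rightarrow> nat) \<Rightarrow> (nat \<Rightarrow> nat) set" where
  "inv_limit_nbrs n E f x = {y \<in> inv_limit n f. \<forall>i. y i \<in> nbrs (n i) (E i) (x i)}"

text \<open>Borel sigma-algebra of V (product topology of discrete spaces, restricted to V).\<close>
definition inv_limit_borel :: "(nat \<Rightarrow> nat) \<Rightarrow> (nat \<Rightarrow> nat \<Rightarrow> nat) \<Rightarrow> (nat \<Rightarrow> nat) measure" where
  "inv_limit_borel n f = restrict_space borel (inv_limit n f)"

definition tower_op :: "((nat \<Rightarrow> nat) \<Rightarrow> (nat \<Rightarrow> nat) measure) \<Rightarrow> ((nat \<Rightarrow> nat) \<Rightarrow> real) \<Rightarrow> ((nat \<Rightarrow> nat) \<Rightarrow> real)" where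
  "tower_op \<nu> g = (\<lambda>x. \<integral>y. g y \<partial>(\<nu> x))"

definition bounded_meas :: "'a measure \<Rightarrow> ('a \<Rightarrow> real) \<Rightarrow> bool" where
  "bounded_meas M g \<longleftrightarrow> g \<in> borel_measurable M \<and> (\<exists>c. \<forall>x\<in>space M. \<bar>g x\<bar> \<le> c)"

definition P_operator :: "'a measure \<Rightarrow> (('a \<Rightarrow> real) \<Rightarrow> ('a \<Rightarrow> real)) \<Rightarrow> bool" where
  "P_operator M B \<longleftrightarrow>
     (\<forall>g h (a::real) b. bounded_meas M g \<longrightarrow> bounded_meas M h \<longrightarrow>
        (AE x in M. B (\<lambda>y. a * g y + b * h y) x = a * B g x + b * B h x)) \<and>
     (\<exists>C. \<forall>g. bounded_meas M g \<longrightarrow> (\<forall>x\<in>space M. \<bar>g x\<bar> \<le> 1) \<longrightarrow>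
        integrable M (B g) \<and> (\<integral>x. \<bar>B g x\<bar> \<partial>M) \<le> C)"

text \<open>Borel measurable space of R^(2k), realised as extensional functions on {..<2k}.\<close>
definition Rspace :: "nat \<Rightarrow> (nat \<Rightarrow> real) measure" where
  "Rspace k = PiM {..<2*k} (\<lambda>_. borel)"

definition S_k :: "'a measure \<Rightarrow> (('a \<Rightarrow> real) \<Rightarrow> ('a \<Rightarrow> real)) \<Rightarrow> nat \<Rightarrow> (nat \<Rightarrow> real) measure set" where
  "S_k M B k = {distr M (Rspace k)
       (\<lambda>x. \<lambda>j\<in>{..<2*k}. if j < k then v j x else B (v (j - k)) x) | v.
       \<forall>j<k. v j \<in> borel_measurable M \<and> (\<forall>x\<in>space M. -1 \<le> v j x \<and> v j x \<le> 1)}"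

definition edist :: "nat \<Rightarrow> (nat \<Rightarrow> real) \<Rightarrow> (nat \<Rightarrow> real) \<Rightarrow> real" where
  "edist k x y = sqrt (\<Sum>j<2*k. (x j - y j)\<^sup>2)"

definition eps_nbhd :: "nat \<Rightarrow> (nat \<Rightarrow> real) set \<Rightarrow> real \<Rightarrow> (nat \<Rightarrow> real) set" where
  "eps_nbhd k U e = {y \<in> space (Rspace k). \<exists>x\<in>U. edist k x y < e}"

definition LP_dist :: "nat \<Rightarrow> (nat \<Rightarrow> real) measure \<Rightarrow> (nat \<Rightarrow> real) measure \<Rightarrow> real" where
  "LP_dist k P Q = Inf {e. e > 0 \<and> (\<forall>U \<in> sets (Rspace k).
       measure P U \<le> measure Q (eps_nbhd k U e) + e \<and>
       measure Q U \<le> measure P (eps_nbhd k U e) + e)}"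

definition haus_LP :: "nat \<Rightarrow> (nat \<Rightarrow> real) measure set \<Rightarrow> (nat \<Rightarrow> real) measure set \<Rightarrow> real" where
  "haus_LP k X Y = max (SUP P\<in>X. INF Q\<in>Y. LP_dist k P Q) (SUP Q\<in>Y. INF P\<in>X. LP_dist k P Q)"

definition d_M :: "'a measure \<Rightarrow> (('a \<Rightarrow> real) \<Rightarrow> ('a \<Rightarrow> real)) \<Rightarrow>
                   'b measure \<Rightarrow> (('b \<Rightarrow> real) \<Rightarrow> ('b \<Rightarrow> real)) \<Rightarrow> real" where
  "d_M M B N C = (\<Sum>k. (1/2) ^ Suc k * haus_LP (Suc k) (S_k M B (Suc k)) (S_k N C (Suc k)))"

definition action_convergent :: "(nat \<Rightarrow> 'a measure) \<Rightarrow> (nat \<Rightarrow> (('a \<Rightarrow> real) \<Rightarrow> ('a \<Rightarrow> real))) \<Rightarrow> bool" where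
  "action_convergent M B \<longleftrightarrow>
     (\<forall>k\<ge>1. \<forall>e>0. \<exists>N. \<forall>p\<ge>N. \<forall>q\<ge>N. haus_LP k (S_k (M p) (B p) k) (S_k (M q) (B q) k) < e)"

end

theory Submission
  imports Defs
begin

lemma sets_borel_fun_nat: "sets (borel :: (nat \<Rightarrow> nat) measure) = sets (Pi\<^sub>M UNIV (\<lambda>_. borel))"
  by (rule sets_PiM_equal_borel[symmetric])

lemma coord_meas_borel: "(\<lambda>x::nat\<Rightarrow>nat. x i) \<in> measurable borel (count_space UNIV)"
proof -
  have "(\<lambda>x::nat\<Rightarrow>nat. x i) \<in> measurable (Pi\<^sub>M UNIV (\<lambda>_. borel)) borel"
    by (rule measurable_component_singleton) simp
  then have "(\<lambda>x::nat\<Rightarrow>nat. x i) \<in> measurable borel borel"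
    using measurable_cong_sets[OF sets_borel_fun_nat refl] by blast
  then show ?thesis using measurable_cong_sets[OF refl sets_borel_eq_count_space] by blast
qed

lemma coord_set_borel: "{x::nat\<Rightarrow>nat. x i \<in> T} \<in> sets borel"
proof -
  have "(\<lambda>x::nat\<Rightarrow>nat. x i) -` T \<inter> space borel \<in> sets borel"
    by (rule measurable_sets[OF coord_meas_borel]) simp
  then show ?thesis by (simp add: vimage_def)
qed

lemma inv_limit_borel_set: "inv_limit n f \<in> sets borel"
proof -
  have eq: "inv_limit n f = (\<Inter>i. {x. x i \<in> {..<n i}} \<inter> (\<Union>c. {x. x (Suc i) \<in> {c}} \<inter> {x. x i \<in> {f i c}}))"
  proof (rule set_eqI)
    fix x :: "nat \<Rightarrow> nat"
    have "x \<in> (\<Union>c. {x. x (Suc i) \<in> {c}} \<inter> {x. x i \<in> {f i c}}) \<longleftrightarrow> (f i (x (Suc i)) = x i)" for i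
      by auto
    then show "x \<in> inv_limit n f \<longleftrightarrow> x \<in> (\<Inter>i. {x. x i \<in> {..<n i}} \<inter> (\<Union>c. {x. x (Suc i) \<in> {c}} \<inter> {x. x i \<in> {f i c}}))"
      unfolding inv_limit_def by simp
  qed
  show ?thesis unfolding eq
    by (intro sets.countable_INT' sets.countable_UN' sets.Int coord_set_borel) auto
qed

definition cylG :: "(nat \<Rightarrow> nat) \<Rightarrow> (nat \<Rightarrow> nat \<Rightarrow> nat) \<Rightarrow> (nat \<Rightarrow> nat) set set" where
  "cylG n f = {{x \<in> inv_limit n f. x i \<in> T} | i T. True}"

lemma sets_inv_limit_borel: "sets (inv_limit_borel n f) = sigma_sets (inv_limit n f) (cylG n f)"
proof -
  let ?V = "inv_limit n f"
  have eqB: "sets (borel :: (nat \<Rightarrow> nat) measure) = sigma_sets UNIV {{x::nat\<Rightarrow>nat. x i \<in> A} | i A. True}"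
    unfolding sets_borel_fun_nat sets_PiM_single by (simp add: sets_borel_eq_count_space)
  have "sets (inv_limit_borel n f) = (\<inter>) ?V ` sets (borel :: (nat \<Rightarrow> nat) measure)"
    unfolding inv_limit_borel_def by (rule sets_restrict_space)
  also have "\<dots> = sigma_sets ?V ((\<inter>) ?V ` {{x::nat\<Rightarrow>nat. x i \<in> A} | i A. True})"
    unfolding eqB
  proof (rule sigma_sets_Int)
    show "?V \<in> sigma_sets UNIV {{x::nat\<Rightarrow>nat. x i \<in> A} | i A. True}"
      using inv_limit_borel_set[of n f] eqB by simp
  qed simp
  also have "(\<inter>) ?V ` {{x::nat\<Rightarrow>nat. x i \<in> A} | i A. True} = cylG n f"
  proof (rule set_eqI)
    fix Z
    show "Z \<in> (\<inter>) ?V ` {{x::nat\<Rightarrow>nat. x i \<in> A} | i A. True} \<longleftrightarrow> Z \<in> cylG n f"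
    proof
      assume "Z \<in> (\<inter>) ?V ` {{x::nat\<Rightarrow>nat. x i \<in> A} | i A. True}"
      then obtain i A where "Z = ?V \<inter> {x. x i \<in> A}" by auto
      then have "Z = {x \<in> ?V. x i \<in> A}" by auto
      then show "Z \<in> cylG n f" unfolding cylG_def by auto
    next
      assume "Z \<in> cylG n f"
      then obtain i A where "Z = {x \<in> ?V. x i \<in> A}" unfolding cylG_def by auto
      then have "Z = ?V \<inter> {x. x i \<in> A}" by auto
      then show "Z \<in> (\<inter>) ?V ` {{x::nat\<Rightarrow>nat. x i \<in> A} | i A. True}" by auto
    qed
  qed
  finally show ?thesis .
qed

fun comp :: "(nat \<Rightarrow> nat \<Rightarrow> nat) \<Rightarrow> nat \<Rightarrow> nat \<Rightarrow> nat \<Rightarrow> nat" where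
  "comp f l 0 c = c"
| "comp f l (Suc t) c = comp f l t (f (l + t) c)"

lemma comp_chain: "x \<in> inv_limit n f \<Longrightarrow> x l = comp f l t (x (l + t))"
proof (induction t)
  case 0 then show ?case by simp
next
  case (Suc t)
  then have "x (l + t) = f (l + t) (x (Suc (l + t)))" unfolding inv_limit_def by auto
  then show ?case using Suc by simp
qed

lemma cylG_lift:
  assumes "j \<le> i"
  shows "{x \<in> inv_limit n f. x j \<in> T} = {x \<in> inv_limit n f. x i \<in> {c. comp f j (i - j) c \<in> T}}"
  using comp_chain[of _ n f j "i - j"] assms by auto

lemma cylG_Int_stable: "Int_stable (cylG n f)"
proof (rule Int_stableI)
  fix A B assume A: "A \<in> cylG n f" and B: "B \<in> cylG n f"
  then obtain i S j T where AS: "A = {x \<in> inv_limit n f. x i \<in> S}" and BT: "B = {x \<in> inv_limit n f. x j \<in> T}"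
    unfolding cylG_def by auto
  define m where "m = max i j"
  have "A = {x \<in> inv_limit n f. x m \<in> {c. comp f i (m - i) c \<in> S}}"
    using AS cylG_lift[of i m n f S] m_def by simp
  moreover have "B = {x \<in> inv_limit n f. x m \<in> {c. comp f j (m - j) c \<in> T}}"
    using BT cylG_lift[of j m n f T] m_def by simp
  ultimately have "A \<inter> B = {x \<in> inv_limit n f. x m \<in> {c. comp f i (m - i) c \<in> S} \<inter> {c. comp f j (m - j) c \<in> T}}"
    by auto
  then show "A \<inter> B \<in> cylG n f" unfolding cylG_def by blast
qed

locale towerL =
  fixes n :: "nat \<Rightarrow> nat" and E :: "nat \<Rightarrow> nat \<Rightarrow> nat \<Rightarrow> bool"
    and f :: "nat \<Rightarrow> nat \<Rightarrow> nat" and a b d :: "nat \<Rightarrow> nat"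
    and \<mu> :: "(nat \<Rightarrow> nat) measure"
    and \<nu> :: "(nat \<Rightarrow> nat) \<Rightarrow> (nat \<Rightarrow> nat) measure"
  assumes n_pos: "\<And>i. 0 < n i"
    and graphs: "\<And>i. fin_graph (n i) (E i)"
    and tower: "\<And>i. uniform_map (n i) (E i) (n (Suc i)) (E (Suc i)) (f i) (a i) (b i)"
    and reg: "\<And>i. regular (n i) (E i) (d i)"
    and d_pos: "\<And>i. 0 < d i"
    and mu_prob: "prob_space \<mu>"
    and mu_sets: "sets \<mu> = sets (inv_limit_borel n f)"
    and mu_space: "space \<mu> = inv_limit n f"
    and mu_proj: "\<And>i. distr \<mu> (count_space {..<n i}) (\<lambda>x. x i) = uniform_count_measure {..<n i}"
    and nu_prob: "\<And>x. x \<in> inv_limit n f \<Longrightarrow> prob_space (\<nu> x)"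
    and nu_sets: "\<And>x. x \<in> inv_limit n f \<Longrightarrow> sets (\<nu> x) = sets (inv_limit_borel n f)"
    and nu_space: "\<And>x. x \<in> inv_limit n f \<Longrightarrow> space (\<nu> x) = inv_limit n f"
    and nu_supp: "\<And>x. x \<in> inv_limit n f \<Longrightarrow> emeasure (\<nu> x) (inv_limit_nbrs n E f x) = 1"
    and nu_proj: "\<And>x i. x \<in> inv_limit n f \<Longrightarrow>
       distr (\<nu> x) (count_space {..<n i}) (\<lambda>y. y i) = uniform_measure (count_space {..<n i}) (nbrs (n i) (E i) (x i))"
begin

abbreviation "V \<equiv> inv_limit n f"

lemma mu_sets': "sets \<mu> = sigma_sets V (cylG n f)"
  using mu_sets sets_inv_limit_borel by simp

lemma nu_sets': "x \<in> V \<Longrightarrow> sets (\<nu> x) = sets \<mu>"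
  using mu_sets nu_sets by simp

lemma V_ne: "V \<noteq> {}"
  using mu_prob mu_space prob_space.not_empty by fastforce

lemma coord_meas: "(\<lambda>x. x i) \<in> measurable \<mu> (count_space UNIV)"
proof -
  have "(\<lambda>x::nat\<Rightarrow>nat. x i) \<in> measurable (restrict_space borel V) (count_space UNIV)"
    by (rule measurable_restrict_space1[OF coord_meas_borel])
  then show ?thesis using measurable_cong_sets[OF mu_sets refl] unfolding inv_limit_borel_def by blast
qed

lemma coord_meas_nu: "x \<in> V \<Longrightarrow> (\<lambda>y. y i) \<in> measurable (\<nu> x) (count_space UNIV)"
  using coord_meas measurable_cong_sets[OF nu_sets' refl] by blast

lemma coord_fun_meas: "range g \<subseteq> space N \<Longrightarrow> (\<lambda>x. g (x i)) \<in> measurable \<mu> N"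
  by (rule measurable_compose[OF coord_meas]) (auto simp add: measurable_count_space_eq1)

lemma coord_fun_meas_nu: "x \<in> V \<Longrightarrow> range g \<subseteq> space N \<Longrightarrow> (\<lambda>y. g (y i)) \<in> measurable (\<nu> x) N"
  by (rule measurable_compose[OF coord_meas_nu]) (auto simp add: measurable_count_space_eq1)

lemma V_lt: "x \<in> V \<Longrightarrow> x i < n i"
  unfolding inv_limit_def by auto

lemma coord_meas_fin: "(\<lambda>x. x i) \<in> measurable \<mu> (count_space {..<n i})"
proof (subst measurable_count_space_eq2, simp, intro conjI ballI)
  show "(\<lambda>x. x i) \<in> space \<mu> \<rightarrow> {..<n i}" using V_lt mu_space by auto
  fix c show "(\<lambda>x. x i) -` {c} \<inter> space \<mu> \<in> sets \<mu>"
    using measurable_sets[OF coord_meas, of "{c}"] by simp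
qed

lemma coord_meas_fin_nu: "x \<in> V \<Longrightarrow> (\<lambda>y. y i) \<in> measurable (\<nu> x) (count_space {..<n i})"
  using coord_meas_fin measurable_cong_sets[OF nu_sets' refl] by blast

lemma cyl_in_sets: "{x \<in> V. x i \<in> T} \<in> sets \<mu>"
proof -
  have "(\<lambda>x. x i) -` T \<inter> space \<mu> \<in> sets \<mu>"
    using measurable_sets[OF coord_meas, of T] by simp
  then show ?thesis using mu_space by (simp add: vimage_def Int_def conj_commute)
qed

lemma emeasure_cyl: "emeasure \<mu> {x \<in> V. x i \<in> T} = card (T \<inter> {..<n i}) / n i"
proof -
  have "emeasure \<mu> {x \<in> V. x i \<in> T} = emeasure \<mu> ((\<lambda>x. x i) -` (T \<inter> {..<n i}) \<inter> space \<mu>)"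
    using mu_space V_lt by (intro arg_cong2[where f=emeasure]) auto
  also have "\<dots> = emeasure (distr \<mu> (count_space {..<n i}) (\<lambda>x. x i)) (T \<inter> {..<n i})"
    by (rule emeasure_distr[symmetric, OF coord_meas_fin]) simp
  also have "\<dots> = card (T \<inter> {..<n i}) / n i"
    unfolding mu_proj by (subst emeasure_uniform_count_measure) auto
  finally show ?thesis .
qed

lemma nbrs_sub: "nbrs (n i) (E i) c \<subseteq> {..<n i}"
  unfolding nbrs_def by auto

lemma card_nbrs: "c < n i \<Longrightarrow> card (nbrs (n i) (E i) c) = d i"
  using reg unfolding regular_def by auto

lemma emeasure_nu_cyl:
  assumes x: "x \<in> V"
  shows "emeasure (\<nu> x) {y \<in> V. y i \<in> T} = ennreal (card (T \<inter> nbrs (n i) (E i) (x i)) / d i)"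
proof -
  have "emeasure (\<nu> x) {y \<in> V. y i \<in> T} = emeasure (\<nu> x) ((\<lambda>y. y i) -` (T \<inter> {..<n i}) \<inter> space (\<nu> x))"
    using nu_space[OF x] V_lt by (intro arg_cong2[where f=emeasure]) auto
  also have "\<dots> = emeasure (distr (\<nu> x) (count_space {..<n i}) (\<lambda>y. y i)) (T \<inter> {..<n i})"
    by (rule emeasure_distr[symmetric, OF coord_meas_fin_nu[OF x]]) simp
  also have "\<dots> = emeasure (count_space {..<n i}) (nbrs (n i) (E i) (x i) \<inter> (T \<inter> {..<n i})) /
       emeasure (count_space {..<n i}) (nbrs (n i) (E i) (x i))"
    unfolding nu_proj[OF x] by (subst emeasure_uniform_measure) (auto simp: nbrs_def)
  also have "\<dots> = of_nat (card (T \<inter> nbrs (n i) (E i) (x i))) / of_nat (d i)"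
  proof -
    have f1: "finite (nbrs (n i) (E i) (x i))" using nbrs_sub finite_subset by blast
    have "nbrs (n i) (E i) (x i) \<inter> (T \<inter> {..<n i}) = T \<inter> nbrs (n i) (E i) (x i)" using nbrs_sub by blast
    moreover have "emeasure (count_space {..<n i}) (T \<inter> nbrs (n i) (E i) (x i)) = of_nat (card (T \<inter> nbrs (n i) (E i) (x i)))"
      using f1 nbrs_sub[of i "x i"] by (subst emeasure_count_space_finite) auto
    ultimately show ?thesis using f1 card_nbrs[OF V_lt[OF x]] nbrs_sub[of i "x i"]
      by (simp add: emeasure_count_space_finite)
  qed
  also have "\<dots> = ennreal (card (T \<inter> nbrs (n i) (E i) (x i)) / d i)"
    using d_pos[of i] by (simp add: divide_ennreal ennreal_of_nat_eq_real_of_nat)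
  finally show ?thesis .
qed

end

context towerL begin

lemma nbrs_sym: "nbrs (n i) (E i) c = {j. j < n i \<and> E i j c}"
  using graphs[of i] unfolding nbrs_def fin_graph_def by auto

lemma kernel: "\<nu> \<in> measurable \<mu> (subprob_algebra \<mu>)"
proof (rule measurable_subprob_algebra_generated[OF mu_sets' cylG_Int_stable])
  show "cylG n f \<subseteq> Pow V" unfolding cylG_def by auto
  show "\<And>x. x \<in> space \<mu> \<Longrightarrow> subprob_space (\<nu> x)"
    using nu_prob mu_space prob_space_imp_subprob_space by auto
  show "\<And>x. x \<in> space \<mu> \<Longrightarrow> sets (\<nu> x) = sets \<mu>" using nu_sets' mu_space by auto
  fix A assume "A \<in> cylG n f"
  then obtain i T where A: "A = {x \<in> V. x i \<in> T}" unfolding cylG_def by auto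
  have "(\<lambda>x. ennreal (card (T \<inter> nbrs (n i) (E i) (x i)) / d i)) \<in> borel_measurable \<mu>"
    by (rule coord_fun_meas) simp
  then show "(\<lambda>x. emeasure (\<nu> x) A) \<in> borel_measurable \<mu>"
    by (rule measurable_cong[THEN iffD1, rotated]) (simp add: A emeasure_nu_cyl mu_space)
next
  have "(\<lambda>x. 1::ennreal) \<in> borel_measurable \<mu>" by simp
  then show "(\<lambda>x. emeasure (\<nu> x) V) \<in> borel_measurable \<mu>"
    by (rule measurable_cong[THEN iffD1, rotated])
       (use nu_prob nu_space mu_space prob_space.emeasure_space_1 in fastforce)
qed

lemma tower_op_meas: "g \<in> borel_measurable \<mu> \<Longrightarrow> tower_op \<nu> (g :: _ \<Rightarrow> real) \<in> borel_measurable \<mu>"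
  unfolding tower_op_def
  by (rule measurable_compose[OF kernel integral_measurable_subprob_algebra])

lemma tower_op_cyl:
  assumes x: "x \<in> V"
  shows "tower_op \<nu> (\<lambda>y. u (y i)) x = adj_op (n i) (E i) (d i) u (x i)"
proof -
  let ?N = "nbrs (n i) (E i) (x i)"
  have fin: "finite ?N" using nbrs_sub finite_subset by blast
  have cN: "card ?N = d i" using card_nbrs[OF V_lt[OF x]] .
  have "tower_op \<nu> (\<lambda>y. u (y i)) x = integral\<^sup>L (distr (\<nu> x) (count_space {..<n i}) (\<lambda>y. y i)) u"
    unfolding tower_op_def by (rule integral_distr[symmetric, OF coord_meas_fin_nu[OF x]]) simp
  also have "\<dots> = integral\<^sup>L (uniform_measure (count_space {..<n i}) ?N) u"
    unfolding nu_proj[OF x] ..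
  also have "uniform_measure (count_space {..<n i}) ?N = density (count_space {..<n i}) (\<lambda>c. ennreal (indicator ?N c / d i))"
  proof -
    have "emeasure (count_space {..<n i}) ?N = of_nat (d i)"
      using fin cN nbrs_sub[of i "x i"] by (subst emeasure_count_space_finite) auto
    moreover have "1 / ennreal (real (d i)) = ennreal (1 / real (d i))"
      using divide_ennreal[of 1 "real (d i)"] d_pos[of i] by simp
    ultimately show ?thesis unfolding uniform_measure_def
      using d_pos[of i]
      by (intro density_cong) (auto simp: indicator_def divide_ennreal ennreal_of_nat_eq_real_of_nat)
  qed
  also have "integral\<^sup>L (density (count_space {..<n i}) (\<lambda>c. ennreal (indicator ?N c / d i))) u
      = integral\<^sup>L (count_space {..<n i}) (\<lambda>c. (indicator ?N c / d i) *\<^sub>R u c)"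
    by (rule integral_density) auto
  also have "\<dots> = (\<Sum>c<n i. (indicator ?N c / d i) *\<^sub>R u c)"
    by (rule lebesgue_integral_count_space_finite) simp
  also have "\<dots> = (\<Sum>c<n i. (indicator ?N c / d i) * u c)"
    by simp
  also have "\<dots> = (\<Sum>c\<in>?N. u c) / d i"
  proof -
    have "(\<Sum>c<n i. (indicator ?N c / d i) * u c) = (\<Sum>c<n i. if c \<in> ?N then u c / d i else 0)"
      by (intro sum.cong) (auto simp: indicator_def)
    also have "\<dots> = (\<Sum>c\<in>{c \<in> {..<n i}. c \<in> ?N}. u c / d i)"
      by (rule sum.inter_filter[symmetric]) simp
    also have "{c \<in> {..<n i}. c \<in> ?N} = ?N" using nbrs_sub by blast
    finally show ?thesis by (simp add: sum_divide_distrib)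
  qed
  also have "\<dots> = adj_op (n i) (E i) (d i) u (x i)"
    unfolding adj_op_def nbrs_sym ..
  finally show ?thesis .
qed

lemma double_count: "(\<Sum>c<n i. card (T \<inter> nbrs (n i) (E i) c)) = d i * card (T \<inter> {..<n i})"
proof -
  have "(\<Sum>c<n i. card (T \<inter> nbrs (n i) (E i) c)) = (\<Sum>c<n i. \<Sum>t<n i. if t \<in> T \<and> E i c t then 1 else 0)"
  proof (intro sum.cong refl)
    fix c
    have "T \<inter> nbrs (n i) (E i) c = {t \<in> {..<n i}. t \<in> T \<and> E i c t}" unfolding nbrs_def by auto
    then show "card (T \<inter> nbrs (n i) (E i) c) = (\<Sum>t<n i. if t \<in> T \<and> E i c t then 1 else 0)"
      by (simp add: sum.inter_filter[symmetric])
  qed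
  also have "\<dots> = (\<Sum>t<n i. \<Sum>c<n i. if t \<in> T \<and> E i c t then 1 else 0)"
    by (rule sum.swap)
  also have "\<dots> = (\<Sum>t<n i. if t \<in> T then d i else 0)"
  proof (intro sum.cong refl)
    fix t assume t: "t \<in> {..<n i}"
    have "(\<Sum>c<n i. if t \<in> T \<and> E i c t then 1 else (0::nat)) = (if t \<in> T then card {c \<in> {..<n i}. E i c t} else 0)"
      by (simp add: sum.inter_filter[symmetric])
    also have "{c \<in> {..<n i}. E i c t} = nbrs (n i) (E i) t" unfolding nbrs_sym by auto
    finally show "(\<Sum>c<n i. if t \<in> T \<and> E i c t then 1 else 0) = (if t \<in> T then d i else 0)"
      using card_nbrs[of t i] t by simp
  qed
  also have "\<dots> = d i * card (T \<inter> {..<n i})"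
  proof -
    have "(\<Sum>t<n i. if t \<in> T then d i else 0) = (\<Sum>t\<in>{t \<in> {..<n i}. t \<in> T}. d i)"
      using sum.inter_filter[of "{..<n i}" "\<lambda>_. d i" "\<lambda>t. t \<in> T"] by simp
    also have "{t \<in> {..<n i}. t \<in> T} = T \<inter> {..<n i}" by auto
    finally show ?thesis by simp
  qed
  finally show ?thesis .
qed

end

context towerL begin

lemma space_mu_ne: "space \<mu> \<noteq> {}" using V_ne mu_space by simp

lemma nn_integral_coord:
  assumes h: "\<And>c. 0 \<le> h c"
  shows "(\<integral>\<^sup>+x. ennreal (h (x i)) \<partial>\<mu>) = ennreal ((\<Sum>c<n i. h c) / n i)"
proof -
  have "(\<integral>\<^sup>+x. ennreal (h (x i)) \<partial>\<mu>) = (\<integral>\<^sup>+c. ennreal (h c) \<partial>distr \<mu> (count_space {..<n i}) (\<lambda>x. x i))"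
    by (rule nn_integral_distr[symmetric, OF coord_meas_fin]) simp
  also have "\<dots> = (\<integral>\<^sup>+c. ennreal (h c) \<partial>uniform_count_measure {..<n i})"
    unfolding mu_proj ..
  also have "\<dots> = (\<Sum>c<n i. ennreal (1 / real (n i)) * ennreal (h c))"
    unfolding uniform_count_measure_def by (subst nn_integral_point_measure_finite) auto
  also have "\<dots> = (\<Sum>c<n i. ennreal (h c / n i))"
  proof (intro sum.cong refl)
    fix c
    show "ennreal (1 / real (n i)) * ennreal (h c) = ennreal (h c / n i)"
      using h[of c] by (simp add: ennreal_mult[symmetric])
  qed
  also have "\<dots> = ennreal ((\<Sum>c<n i. h c) / n i)"
    using h n_pos[of i] by (subst sum_ennreal) (auto simp: sum_divide_distrib)
  finally show ?thesis .
qed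

lemma bind_eq: "bind \<mu> \<nu> = \<mu>"
proof (rule measure_eqI_generator_eq[OF cylG_Int_stable, where \<Omega>=V and A="\<lambda>_. V"])
  show "cylG n f \<subseteq> Pow V" unfolding cylG_def by auto
  show "sets (bind \<mu> \<nu>) = sigma_sets V (cylG n f)"
    using sets_bind[of \<mu> \<nu> \<mu>, OF _ space_mu_ne] nu_sets' mu_space mu_sets' by simp
  show "sets \<mu> = sigma_sets V (cylG n f)" by (rule mu_sets')
  have "V = {x \<in> V. x 0 \<in> UNIV}" by simp
  then show "range (\<lambda>_. V) \<subseteq> cylG n f" unfolding cylG_def by blast
  show "(\<Union>i. V) = V" by simp
  show "emeasure (bind \<mu> \<nu>) V \<noteq> \<infinity>"
  proof -
    have "emeasure (bind \<mu> \<nu>) V = (\<integral>\<^sup>+x. emeasure (\<nu> x) V \<partial>\<mu>)"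
      by (rule emeasure_bind[OF space_mu_ne kernel]) (simp add: mu_sets' sigma_sets_top)
    also have "\<dots> = (\<integral>\<^sup>+x. 1 \<partial>\<mu>)"
      by (rule nn_integral_cong) (use nu_prob nu_space mu_space prob_space.emeasure_space_1 in fastforce)
    also have "\<dots> = 1" using mu_prob prob_space.emeasure_space_1 by simp
    finally show ?thesis by simp
  qed
  fix X assume "X \<in> cylG n f"
  then obtain i T where X: "X = {x \<in> V. x i \<in> T}" unfolding cylG_def by auto
  have "emeasure (bind \<mu> \<nu>) X = (\<integral>\<^sup>+x. emeasure (\<nu> x) X \<partial>\<mu>)"
    by (rule emeasure_bind[OF space_mu_ne kernel]) (simp add: X cyl_in_sets)
  also have "\<dots> = (\<integral>\<^sup>+x. ennreal (card (T \<inter> nbrs (n i) (E i) (x i)) / d i) \<partial>\<mu>)"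
    by (rule nn_integral_cong) (simp add: X emeasure_nu_cyl mu_space)
  also have "\<dots> = ennreal ((\<Sum>c<n i. card (T \<inter> nbrs (n i) (E i) c) / d i) / n i)"
    by (rule nn_integral_coord) simp
  also have "(\<Sum>c<n i. card (T \<inter> nbrs (n i) (E i) c) / d i) = card (T \<inter> {..<n i})"
  proof -
    have "(\<Sum>c<n i. real (card (T \<inter> nbrs (n i) (E i) c)) / d i) = real (\<Sum>c<n i. card (T \<inter> nbrs (n i) (E i) c)) / d i"
      by (simp add: sum_divide_distrib)
    also have "\<dots> = card (T \<inter> {..<n i})"
      unfolding double_count using d_pos[of i] by simp
    finally show ?thesis .
  qed
  also have "ennreal (real (card (T \<inter> {..<n i})) / n i) = emeasure \<mu> X"
    unfolding X emeasure_cyl using n_pos[of i]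
    by (simp add: divide_ennreal[symmetric] ennreal_of_nat_eq_real_of_nat)
  finally show "emeasure (bind \<mu> \<nu>) X = emeasure \<mu> X" .
qed

lemma nn_integral_stationary:
  assumes g: "g \<in> borel_measurable \<mu>"
  shows "(\<integral>\<^sup>+x. (\<integral>\<^sup>+y. g y \<partial>\<nu> x) \<partial>\<mu>) = (\<integral>\<^sup>+x. g x \<partial>\<mu>)"
proof -
  have "(\<integral>\<^sup>+x. g x \<partial>(bind \<mu> \<nu>)) = (\<integral>\<^sup>+x. (\<integral>\<^sup>+y. g y \<partial>\<nu> x) \<partial>\<mu>)"
    by (rule nn_integral_bind[OF g kernel])
  then show ?thesis unfolding bind_eq by simp
qed

lemma meas_nu: "x \<in> V \<Longrightarrow> g \<in> borel_measurable \<mu> \<Longrightarrow> g \<in> borel_measurable (\<nu> x)"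
  using measurable_cong_sets[OF nu_sets'[symmetric] refl] by blast

lemma integrable_nu:
  fixes g :: "(nat \<Rightarrow> nat) \<Rightarrow> real" and B :: real
  assumes x: "x \<in> V" and g: "g \<in> borel_measurable \<mu>" and b: "\<forall>y\<in>V. \<bar>g y\<bar> \<le> B"
  shows "integrable (\<nu> x) g"
proof -
  interpret P: prob_space "\<nu> x" using nu_prob[OF x] .
  have "AE y in \<nu> x. norm (g y) \<le> B" using b nu_space[OF x] by (intro AE_I2) simp
  then show ?thesis by (rule P.integrable_const_bound) (rule meas_nu[OF x g])
qed

lemma integrable_mu:
  fixes g :: "(nat \<Rightarrow> nat) \<Rightarrow> real" and B :: real
  assumes g: "g \<in> borel_measurable \<mu>" and b: "\<forall>y\<in>V. \<bar>g y\<bar> \<le> B"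
  shows "integrable \<mu> g"
proof -
  interpret P: prob_space \<mu> using mu_prob .
  have "AE y in \<mu>. norm (g y) \<le> B" using b mu_space by (intro AE_I2) simp
  then show ?thesis by (rule P.integrable_const_bound) (rule g)
qed

lemma tower_op_bound:
  fixes g :: "(nat \<Rightarrow> nat) \<Rightarrow> real" and B :: real
  assumes x: "x \<in> V" and g: "g \<in> borel_measurable \<mu>" "\<forall>y\<in>V. \<bar>g y\<bar> \<le> B"
  shows "\<bar>tower_op \<nu> g x\<bar> \<le> B"
proof -
  interpret P: prob_space "\<nu> x" using nu_prob[OF x] .
  have "\<bar>tower_op \<nu> g x\<bar> \<le> (\<integral>y. \<bar>g y\<bar> \<partial>\<nu> x)"
    unfolding tower_op_def by (rule integral_abs_bound)
  also have "\<dots> \<le> (\<integral>y. B \<partial>\<nu> x)"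
    using g nu_space[OF x] integrable_nu[OF x g(1)] 
    by (intro integral_mono) (auto intro!: integrable_nu[OF x] borel_measurable_abs)
  also have "\<dots> = B" using P.prob_space by simp
  finally show ?thesis .
qed

lemma L1_contract:
  fixes g h :: "(nat \<Rightarrow> nat) \<Rightarrow> real" and B :: real
  assumes g: "g \<in> borel_measurable \<mu>" "\<forall>y\<in>V. \<bar>g y\<bar> \<le> B"
      and h: "h \<in> borel_measurable \<mu>" "\<forall>y\<in>V. \<bar>h y\<bar> \<le> B"
  shows "(\<integral>x. \<bar>tower_op \<nu> g x - tower_op \<nu> h x\<bar> \<partial>\<mu>) \<le> (\<integral>x. \<bar>g x - h x\<bar> \<partial>\<mu>)"
proof -
  let ?p = "\<lambda>y. \<bar>g y - h y\<bar>"
  have pm: "?p \<in> borel_measurable \<mu>" using g h by measurable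
  have pb: "\<forall>y\<in>V. \<bar>?p y\<bar> \<le> 2 * B" using g h by fastforce
  have pw: "\<bar>tower_op \<nu> g x - tower_op \<nu> h x\<bar> \<le> (\<integral>y. ?p y \<partial>\<nu> x)" if x: "x \<in> V" for x
  proof -
    have "tower_op \<nu> g x - tower_op \<nu> h x = (\<integral>y. g y - h y \<partial>\<nu> x)"
      unfolding tower_op_def using integrable_nu[OF x g] integrable_nu[OF x h] by simp
    then show ?thesis by (simp add: integral_abs_bound)
  qed
  let ?q = "\<lambda>x. \<integral>y. ?p y \<partial>\<nu> x"
  have qm: "?q \<in> borel_measurable \<mu>" using tower_op_meas[OF pm] unfolding tower_op_def .
  have qb: "\<forall>x\<in>V. \<bar>?q x\<bar> \<le> 2 * B" using tower_op_bound[OF _ pm pb] unfolding tower_op_def by blast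
  have "(\<integral>x. \<bar>tower_op \<nu> g x - tower_op \<nu> h x\<bar> \<partial>\<mu>) \<le> (\<integral>x. ?q x \<partial>\<mu>)"
  proof (rule integral_mono)
    show "integrable \<mu> (\<lambda>x. \<bar>tower_op \<nu> g x - tower_op \<nu> h x\<bar>)"
    proof (rule integrable_mu)
      show "(\<lambda>x. \<bar>tower_op \<nu> g x - tower_op \<nu> h x\<bar>) \<in> borel_measurable \<mu>"
        using tower_op_meas[OF g(1)] tower_op_meas[OF h(1)] by measurable
      show "\<forall>y\<in>V. \<bar>\<bar>tower_op \<nu> g y - tower_op \<nu> h y\<bar>\<bar> \<le> 2 * B"
        using tower_op_bound[OF _ g] tower_op_bound[OF _ h] by fastforce
    qed
    show "integrable \<mu> ?q" by (rule integrable_mu[OF qm qb])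
    show "\<And>x. x \<in> space \<mu> \<Longrightarrow> \<bar>tower_op \<nu> g x - tower_op \<nu> h x\<bar> \<le> ?q x"
      using pw mu_space by simp
  qed
  also have "(\<integral>x. ?q x \<partial>\<mu>) = (\<integral>x. ?p x \<partial>\<mu>)"
  proof -
    have q0: "0 \<le> ?q x" for x by simp
    have "ennreal (\<integral>x. ?q x \<partial>\<mu>) = (\<integral>\<^sup>+x. ennreal (?q x) \<partial>\<mu>)"
      by (rule nn_integral_eq_integral[symmetric]) (auto intro: integrable_mu[OF qm qb])
    also have "\<dots> = (\<integral>\<^sup>+x. (\<integral>\<^sup>+y. ennreal (?p y) \<partial>\<nu> x) \<partial>\<mu>)"
    proof (rule nn_integral_cong)
      fix x assume "x \<in> space \<mu>"
      then have x: "x \<in> V" using mu_space by simp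
      show "ennreal (?q x) = (\<integral>\<^sup>+y. ennreal (?p y) \<partial>\<nu> x)"
        by (rule nn_integral_eq_integral[symmetric]) (auto intro: integrable_nu[OF x pm pb])
    qed
    also have "\<dots> = (\<integral>\<^sup>+x. ennreal (?p x) \<partial>\<mu>)"
      by (rule nn_integral_stationary) (use pm in measurable)
    also have "\<dots> = ennreal (\<integral>x. ?p x \<partial>\<mu>)"
      by (rule nn_integral_eq_integral) (auto intro: integrable_mu[OF pm pb])
    finally show ?thesis by simp
  qed
  finally show ?thesis .
qed

end

context towerL begin

definition cyl :: "nat \<Rightarrow> nat set \<Rightarrow> (nat \<Rightarrow> nat) set" where
  "cyl i T = {x \<in> V. x i \<in> T}"

definition sdiff :: "'x set \<Rightarrow> 'x set \<Rightarrow> 'x set" where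
  "sdiff X Y = (X - Y) \<union> (Y - X)"

definition appr :: "(nat \<Rightarrow> nat) set \<Rightarrow> bool" where
  "appr X \<longleftrightarrow> (\<forall>\<delta>>0. \<exists>j. \<forall>i\<ge>j. \<exists>T. measure \<mu> (sdiff X (cyl i T)) < \<delta>)"

lemma cyl_sets[simp]: "cyl i T \<in> sets \<mu>"
  unfolding cyl_def by (rule cyl_in_sets)

lemma sets_mu_sub: "X \<in> sets \<mu> \<Longrightarrow> X \<subseteq> V"
  using sets.sets_into_space mu_space by blast

lemma sdiff_sets: "X \<in> sets \<mu> \<Longrightarrow> Y \<in> sets \<mu> \<Longrightarrow> sdiff X Y \<in> sets \<mu>"
  unfolding sdiff_def by auto

lemma appr_all: assumes "X \<in> sets \<mu>" shows "appr X"
proof -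
  have "X \<in> sigma_sets V (cylG n f)" using assms mu_sets' by simp
  then show ?thesis
  proof (induction rule: sigma_sets.induct)
    case (Basic X)
    then obtain j T where X: "X = {x \<in> V. x j \<in> T}" unfolding cylG_def by auto
    show ?case unfolding appr_def
    proof (intro allI impI exI[of _ j] allI impI)
      fix \<delta> :: real and i assume "0 < \<delta>" "j \<le> i"
      then have "X = cyl i {c. comp f j (i - j) c \<in> T}" unfolding X cyl_def using cylG_lift by blast
      then have "sdiff X (cyl i {c. comp f j (i - j) c \<in> T}) = {}" unfolding sdiff_def by simp
      then show "\<exists>T. measure \<mu> (sdiff X (cyl i T)) < \<delta>" using \<open>0 < \<delta>\<close> by (metis measure_empty)
    qed
  next
    case Empty
    show ?case unfolding appr_def
      by (intro allI impI exI[of _ 0] exI[of _ "{}"]) (auto simp: sdiff_def cyl_def)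
  next
    case (Compl X)
    have XV: "X \<subseteq> V" using Compl(1) sigma_sets_into_sp[of "cylG n f" V] unfolding cylG_def by blast
    show ?case unfolding appr_def
    proof (intro allI impI)
      fix \<delta> :: real assume "0 < \<delta>"
      then obtain j where j: "\<forall>i\<ge>j. \<exists>T. measure \<mu> (sdiff X (cyl i T)) < \<delta>"
        using Compl(2) unfolding appr_def by blast
      show "\<exists>j. \<forall>i\<ge>j. \<exists>T. measure \<mu> (sdiff (V - X) (cyl i T)) < \<delta>"
      proof (intro exI[of _ j] allI impI)
        fix i assume "j \<le> i"
        then obtain T where T: "measure \<mu> (sdiff X (cyl i T)) < \<delta>" using j by blast
        have "sdiff (V - X) (cyl i (- T)) = sdiff X (cyl i T)"
          using XV unfolding sdiff_def cyl_def by auto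
        then show "\<exists>T. measure \<mu> (sdiff (V - X) (cyl i T)) < \<delta>" using T by metis
      qed
    qed
  next
    case (Union A)
    interpret P: finite_measure \<mu> using mu_prob prob_space_def by blast
    have As: "A m \<in> sets \<mu>" for m using Union(1) mu_sets' by simp
    show ?case unfolding appr_def
    proof (intro allI impI)
      fix \<delta> :: real assume d: "0 < \<delta>"
      define B where "B M = (\<Union>m<M. A m)" for M
      have Bs: "B M \<in> sets \<mu>" for M unfolding B_def using As by auto
      have "incseq B" unfolding B_def incseq_def by (auto intro: less_le_trans)
      moreover have "range B \<subseteq> sets \<mu>" using Bs by auto
      ultimately have "(\<lambda>M. measure \<mu> (B M)) \<longlonglongrightarrow> measure \<mu> (\<Union>M. B M)"
        by (intro P.finite_Lim_measure_incseq) auto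
      moreover have "(\<Union>M. B M) = (\<Union>m. A m)" unfolding B_def by auto
      ultimately have lim: "(\<lambda>M. measure \<mu> (B M)) \<longlonglongrightarrow> measure \<mu> (\<Union>m. A m)" by simp
      have "\<exists>M. measure \<mu> (\<Union>m. A m) - measure \<mu> (B M) < \<delta> / 2"
      proof -
        have "\<forall>\<^sub>F M in sequentially. measure \<mu> (\<Union>m. A m) - \<delta> / 2 < measure \<mu> (B M)"
          by (rule order_tendstoD(1)[OF lim]) (use d in simp)
        then obtain M where "measure \<mu> (\<Union>m. A m) - \<delta> / 2 < measure \<mu> (B M)"
          by (auto simp: eventually_sequentially)
        then show ?thesis by (intro exI[of _ M]) simp
      qed
      then obtain M where M: "measure \<mu> (\<Union>m. A m) - measure \<mu> (B M) < \<delta> / 2" by blast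
      define e where "e = \<delta> / (2 * real (Suc M))"
      have e: "0 < e" unfolding e_def using d by simp
      have "\<forall>m. \<exists>j. \<forall>i\<ge>j. \<exists>T. measure \<mu> (sdiff (A m) (cyl i T)) < e"
        using Union(2) e unfolding appr_def by blast
      then obtain J where J: "\<And>m i. J m \<le> i \<Longrightarrow> \<exists>T. measure \<mu> (sdiff (A m) (cyl i T)) < e"
        by metis
      show "\<exists>j. \<forall>i\<ge>j. \<exists>T. measure \<mu> (sdiff (\<Union>m. A m) (cyl i T)) < \<delta>"
      proof (intro exI[of _ "\<Sum>m<M. J m"] allI impI)
        fix i assume i: "(\<Sum>m<M. J m) \<le> i"
        have "\<forall>m. \<exists>T. m < M \<longrightarrow> measure \<mu> (sdiff (A m) (cyl i T)) < e"
        proof (intro allI)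
          fix m
          show "\<exists>T. m < M \<longrightarrow> measure \<mu> (sdiff (A m) (cyl i T)) < e"
          proof (cases "m < M")
            case True
            then have "J m \<le> (\<Sum>m<M. J m)" by (intro member_le_sum) auto
            then show ?thesis using J[of m i] i by auto
          qed simp
        qed
        then obtain TT where TT: "\<And>m. m < M \<Longrightarrow> measure \<mu> (sdiff (A m) (cyl i (TT m))) < e"
          by metis
        define T where "T = (\<Union>m<M. TT m)"
        have sub: "sdiff (\<Union>m. A m) (cyl i T) \<subseteq> ((\<Union>m. A m) - B M) \<union> (\<Union>m<M. sdiff (A m) (cyl i (TT m)))"
          unfolding sdiff_def B_def T_def cyl_def by auto
        have UA: "(\<Union>m. A m) \<in> sets \<mu>" using As by (intro sets.countable_UN) auto
        have SD: "(\<Union>m<M. sdiff (A m) (cyl i (TT m))) \<in> sets \<mu>"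
          by (intro sets.finite_UN sdiff_sets As cyl_sets) auto
        have "measure \<mu> (sdiff (\<Union>m. A m) (cyl i T))
            \<le> measure \<mu> (((\<Union>m. A m) - B M) \<union> (\<Union>m<M. sdiff (A m) (cyl i (TT m))))"
          by (rule P.finite_measure_mono[OF sub]) (use UA SD Bs in auto)
        also have "\<dots> \<le> measure \<mu> ((\<Union>m. A m) - B M) + measure \<mu> (\<Union>m<M. sdiff (A m) (cyl i (TT m)))"
          by (rule measure_Un_le) (use UA SD Bs in auto)
        also have "measure \<mu> ((\<Union>m. A m) - B M) = measure \<mu> (\<Union>m. A m) - measure \<mu> (B M)"
          by (rule P.finite_measure_Diff) (use As Bs in \<open>auto simp: B_def\<close>)
        also have "measure \<mu> (\<Union>m<M. sdiff (A m) (cyl i (TT m))) \<le> (\<Sum>m<M. measure \<mu> (sdiff (A m) (cyl i (TT m))))"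
          by (rule measure_UNION_le) (use As in \<open>auto intro!: sdiff_sets\<close>)
        also have "\<dots> \<le> (\<Sum>m<M. e)"
          by (rule sum_mono) (use TT in \<open>auto intro: less_imp_le\<close>)
        also have "\<dots> = real M * e" by simp
        also have "real M * e \<le> \<delta> / 2"
          unfolding e_def using d by (simp add: field_simps)
        finally show "\<exists>T. measure \<mu> (sdiff (\<Union>m. A m) (cyl i T)) < \<delta>"
          using M by (intro exI[of _ T]) linarith
      qed
    qed
  qed
qed

end

context towerL begin

lemma cylfun_integrable: "integrable \<mu> (\<lambda>x. (u :: nat \<Rightarrow> real) (x i))"
proof (rule integrable_mu[where B="\<Sum>c<n i. \<bar>u c\<bar>"])
  show "(\<lambda>x. u (x i)) \<in> borel_measurable \<mu>" by (rule coord_fun_meas) simp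
  show "\<forall>y\<in>V. \<bar>u (y i)\<bar> \<le> (\<Sum>c<n i. \<bar>u c\<bar>)"
    using V_lt by (auto intro!: member_le_sum)
qed

definition fappr :: "((nat \<Rightarrow> nat) \<Rightarrow> real) \<Rightarrow> bool" where
  "fappr g \<longleftrightarrow> (\<forall>\<delta>>0. \<exists>j. \<forall>i\<ge>j. \<exists>u. (\<integral>x. \<bar>g x - u (x i)\<bar> \<partial>\<mu>) < \<delta>)"

lemma diff_integrable: "integrable \<mu> g \<Longrightarrow> integrable \<mu> (\<lambda>x. \<bar>g x - (u :: nat \<Rightarrow> real) (x i)\<bar>)"
  by (intro integrable_abs Bochner_Integration.integrable_diff cylfun_integrable)

lemma fappr_all:
  assumes "integrable \<mu> g"
  shows "fappr g"
  using assms
proof (induction rule: integrable_induct)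
  case (base A c)
  show ?case unfolding fappr_def
  proof (intro allI impI)
    fix \<delta> :: real assume d: "0 < \<delta>"
    have "0 < \<delta> / (\<bar>c\<bar> + 1)" using d by simp
    then obtain j where j: "\<forall>i\<ge>j. \<exists>T. measure \<mu> (sdiff A (cyl i T)) < \<delta> / (\<bar>c\<bar> + 1)"
      using appr_all[OF base(1)] unfolding appr_def by blast
    show "\<exists>j. \<forall>i\<ge>j. \<exists>u. (\<integral>x. \<bar>indicator A x *\<^sub>R c - u (x i)\<bar> \<partial>\<mu>) < \<delta>"
    proof (intro exI[of _ j] allI impI)
      fix i assume "j \<le> i"
      then obtain T where T: "measure \<mu> (sdiff A (cyl i T)) < \<delta> / (\<bar>c\<bar> + 1)" using j by blast
      have "(\<integral>x. \<bar>indicator A x *\<^sub>R c - indicator T (x i) * c\<bar> \<partial>\<mu>) = (\<integral>x. \<bar>c\<bar> * indicator (sdiff A (cyl i T)) x \<partial>\<mu>)"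
      proof (rule Bochner_Integration.integral_cong[OF refl])
        fix x assume "x \<in> space \<mu>"
        then have "x \<in> V" using mu_space by simp
        then show "\<bar>indicator A x *\<^sub>R c - indicator T (x i) * c\<bar> = \<bar>c\<bar> * indicator (sdiff A (cyl i T)) x"
          by (auto simp: indicator_def sdiff_def cyl_def)
      qed
      also have "\<dots> = \<bar>c\<bar> * measure \<mu> (sdiff A (cyl i T))"
      proof -
        interpret P: prob_space \<mu> using mu_prob .
        have S: "sdiff A (cyl i T) \<in> sets \<mu>" using sdiff_sets[OF base(1) cyl_sets] .
        have "emeasure \<mu> (sdiff A (cyl i T)) < top" using P.emeasure_finite[of "sdiff A (cyl i T)"] by (simp add: less_top[symmetric])
        then show ?thesis using S by simp
      qed
      also have "\<dots> \<le> \<bar>c\<bar> * (\<delta> / (\<bar>c\<bar> + 1))"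
        using T by (intro mult_left_mono) auto
      also have "\<dots> < \<delta>" using d by (simp add: field_simps)
      finally show "\<exists>u. (\<integral>x. \<bar>indicator A x *\<^sub>R c - u (x i)\<bar> \<partial>\<mu>) < \<delta>" by (intro exI[of _ "\<lambda>t. indicator T t * c"]) simp
    qed
  qed
next
  case (add g h)
  show ?case unfolding fappr_def
  proof (intro allI impI)
    fix \<delta> :: real assume d: "0 < \<delta>"
    obtain j1 where j1: "\<forall>i\<ge>j1. \<exists>u. (\<integral>x. \<bar>g x - u (x i)\<bar> \<partial>\<mu>) < \<delta> / 2"
      using \<open>fappr g\<close> d unfolding fappr_def by (meson half_gt_zero)
    obtain j2 where j2: "\<forall>i\<ge>j2. \<exists>u. (\<integral>x. \<bar>h x - u (x i)\<bar> \<partial>\<mu>) < \<delta> / 2"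
      using \<open>fappr h\<close> d unfolding fappr_def by (meson half_gt_zero)
    show "\<exists>j. \<forall>i\<ge>j. \<exists>u. (\<integral>x. \<bar>g x + h x - u (x i)\<bar> \<partial>\<mu>) < \<delta>"
    proof (intro exI[of _ "max j1 j2"] allI impI)
      fix i assume "max j1 j2 \<le> i"
      then obtain u1 u2 where u1: "(\<integral>x. \<bar>g x - u1 (x i)\<bar> \<partial>\<mu>) < \<delta> / 2"
        and u2: "(\<integral>x. \<bar>h x - u2 (x i)\<bar> \<partial>\<mu>) < \<delta> / 2"
        using j1[rule_format, of i] j2[rule_format, of i] by (meson max.boundedE)
      have "(\<integral>x. \<bar>g x + h x - (\<lambda>c. u1 c + u2 c) (x i)\<bar> \<partial>\<mu>) \<le> (\<integral>x. \<bar>g x - u1 (x i)\<bar> + \<bar>h x - u2 (x i)\<bar> \<partial>\<mu>)"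
      proof (rule integral_mono)
        show "integrable \<mu> (\<lambda>x. \<bar>g x + h x - (\<lambda>c. u1 c + u2 c) (x i)\<bar>)"
          by (rule diff_integrable) (use \<open>integrable \<mu> g\<close> \<open>integrable \<mu> h\<close> in simp)
        show "integrable \<mu> (\<lambda>x. \<bar>g x - u1 (x i)\<bar> + \<bar>h x - u2 (x i)\<bar>)"
          by (intro Bochner_Integration.integrable_add diff_integrable \<open>integrable \<mu> g\<close> \<open>integrable \<mu> h\<close>)
      qed auto
      also have "\<dots> = (\<integral>x. \<bar>g x - u1 (x i)\<bar> \<partial>\<mu>) + (\<integral>x. \<bar>h x - u2 (x i)\<bar> \<partial>\<mu>)"
        by (intro Bochner_Integration.integral_add diff_integrable \<open>integrable \<mu> g\<close> \<open>integrable \<mu> h\<close>)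
      also have "\<dots> < \<delta>" using u1 u2 by simp
      finally show "\<exists>u. (\<integral>x. \<bar>g x + h x - u (x i)\<bar> \<partial>\<mu>) < \<delta>" by (intro exI[of _ "\<lambda>c. u1 c + u2 c"]) simp
    qed
  qed
next
  case (lim g s)
  note sI = \<open>\<And>i. integrable \<mu> (s i)\<close>
  note sP = \<open>\<And>i. fappr (s i)\<close>
  note sL = \<open>\<And>x. x \<in> space \<mu> \<Longrightarrow> (\<lambda>i. s i x) \<longlonglongrightarrow> g x\<close>
  note sB = \<open>\<And>i x. x \<in> space \<mu> \<Longrightarrow> norm (s i x) \<le> 2 * norm (g x)\<close>
  note gI = \<open>integrable \<mu> g\<close>
  show ?case unfolding fappr_def
  proof (intro allI impI)
    fix \<delta> :: real assume d: "0 < \<delta>"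
    have "(\<lambda>m. \<integral>x. \<bar>s m x - g x\<bar> \<partial>\<mu>) \<longlonglongrightarrow> (\<integral>x. 0 \<partial>\<mu>)"
    proof (rule integral_dominated_convergence[where w="\<lambda>x. 3 * \<bar>g x\<bar>"])
      show "(\<lambda>x. 0::real) \<in> borel_measurable \<mu>" by simp
      show "(\<lambda>x. \<bar>s m x - g x\<bar>) \<in> borel_measurable \<mu>" for m
        using sI[of m] gI by measurable
      show "integrable \<mu> (\<lambda>x. 3 * \<bar>g x\<bar>)" using gI by auto
      show "AE x in \<mu>. (\<lambda>m. \<bar>s m x - g x\<bar>) \<longlonglongrightarrow> 0"
      proof (rule AE_I2)
        fix x assume "x \<in> space \<mu>"
        then have "(\<lambda>m. s m x - g x) \<longlonglongrightarrow> 0" using sL by (simp add: LIM_zero)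
        then show "(\<lambda>m. \<bar>s m x - g x\<bar>) \<longlonglongrightarrow> 0" using tendsto_rabs_zero by blast
      qed
      show "AE x in \<mu>. norm \<bar>s m x - g x\<bar> \<le> 3 * \<bar>g x\<bar>" for m
        using sB[of _ m] by (intro AE_I2) fastforce
    qed
    then have "(\<lambda>m. \<integral>x. \<bar>s m x - g x\<bar> \<partial>\<mu>) \<longlonglongrightarrow> 0" by simp
    then have "\<forall>\<^sub>F m in sequentially. (\<integral>x. \<bar>s m x - g x\<bar> \<partial>\<mu>) < \<delta> / 2"
      by (rule order_tendstoD) (use d in simp)
    then obtain m where m: "(\<integral>x. \<bar>s m x - g x\<bar> \<partial>\<mu>) < \<delta> / 2"
      by (auto simp: eventually_sequentially)
    obtain j where j: "\<forall>i\<ge>j. \<exists>u. (\<integral>x. \<bar>s m x - u (x i)\<bar> \<partial>\<mu>) < \<delta> / 2"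
      using sP[of m] d unfolding fappr_def by (meson half_gt_zero)
    show "\<exists>j. \<forall>i\<ge>j. \<exists>u. (\<integral>x. \<bar>g x - u (x i)\<bar> \<partial>\<mu>) < \<delta>"
    proof (intro exI[of _ j] allI impI)
      fix i assume "j \<le> i"
      then obtain u where u: "(\<integral>x. \<bar>s m x - u (x i)\<bar> \<partial>\<mu>) < \<delta> / 2" using j by auto
      have "(\<integral>x. \<bar>g x - u (x i)\<bar> \<partial>\<mu>) \<le> (\<integral>x. \<bar>s m x - g x\<bar> + \<bar>s m x - u (x i)\<bar> \<partial>\<mu>)"
      proof (rule integral_mono)
        show "integrable \<mu> (\<lambda>x. \<bar>g x - u (x i)\<bar>)" by (rule diff_integrable[OF gI])
        show "integrable \<mu> (\<lambda>x. \<bar>s m x - g x\<bar> + \<bar>s m x - u (x i)\<bar>)"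
          by (intro Bochner_Integration.integrable_add diff_integrable integrable_abs
                Bochner_Integration.integrable_diff sI gI)
      qed auto
      also have "\<dots> = (\<integral>x. \<bar>s m x - g x\<bar> \<partial>\<mu>) + (\<integral>x. \<bar>s m x - u (x i)\<bar> \<partial>\<mu>)"
        by (intro Bochner_Integration.integral_add diff_integrable integrable_abs
                Bochner_Integration.integrable_diff sI gI)
      also have "\<dots> < \<delta>" using m u by simp
      finally show "\<exists>u. (\<integral>x. \<bar>g x - u (x i)\<bar> \<partial>\<mu>) < \<delta>" by blast
    qed
  qed
qed

lemma func_approx:
  fixes v :: "(nat \<Rightarrow> nat) \<Rightarrow> real"
  assumes v: "v \<in> borel_measurable \<mu>" "\<forall>x\<in>V. \<bar>v x\<bar> \<le> 1" and d: "0 < \<delta>"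
  shows "\<exists>j. \<forall>i\<ge>j. \<exists>u. (\<forall>c. \<bar>u c\<bar> \<le> 1) \<and> (\<integral>x. \<bar>v x - u (x i)\<bar> \<partial>\<mu>) < \<delta>"
proof -
  have "integrable \<mu> v" by (rule integrable_mu[OF v])
  then obtain j where j: "\<forall>i\<ge>j. \<exists>u. (\<integral>x. \<bar>v x - u (x i)\<bar> \<partial>\<mu>) < \<delta>"
    using fappr_all d unfolding fappr_def by blast
  show ?thesis
  proof (intro exI[of _ j] allI impI)
    fix i assume "j \<le> i"
    then obtain u where u: "(\<integral>x. \<bar>v x - u (x i)\<bar> \<partial>\<mu>) < \<delta>" using j by auto
    define w where "w c = max (-1) (min 1 (u c))" for c
    have "(\<integral>x. \<bar>v x - w (x i)\<bar> \<partial>\<mu>) \<le> (\<integral>x. \<bar>v x - u (x i)\<bar> \<partial>\<mu>)"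
    proof (rule integral_mono)
      show "integrable \<mu> (\<lambda>x. \<bar>v x - w (x i)\<bar>)" by (rule diff_integrable) fact
      show "integrable \<mu> (\<lambda>x. \<bar>v x - u (x i)\<bar>)" by (rule diff_integrable) fact
      fix x assume "x \<in> space \<mu>"
      then have "\<bar>v x\<bar> \<le> 1" using v mu_space by auto
      then show "\<bar>v x - w (x i)\<bar> \<le> \<bar>v x - u (x i)\<bar>" unfolding w_def by auto
    qed
    moreover have "\<forall>c. \<bar>w c\<bar> \<le> 1" unfolding w_def by auto
    ultimately show "\<exists>u. (\<forall>c. \<bar>u c\<bar> \<le> 1) \<and> (\<integral>x. \<bar>v x - u (x i)\<bar> \<partial>\<mu>) < \<delta>"
      using u by (intro exI[of _ w]) auto
  qed
qed

end

lemma edist_L2: "edist k x y = L2_set (\<lambda>j. x j - y j) {..<2*k}"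
  unfolding edist_def L2_set_def ..

lemma edist_nonneg: "0 \<le> edist k x y"
  unfolding edist_L2 by simp

lemma edist_sym: "edist k x y = edist k y x"
  unfolding edist_def by (simp add: power2_commute)

lemma edist_self: "edist k x x = 0"
  unfolding edist_def by simp

lemma edist_triangle: "edist k x z \<le> edist k x y + edist k y z"
proof -
  have "edist k x z = L2_set (\<lambda>j. (x j - y j) + (y j - z j)) {..<2*k}"
    unfolding edist_L2 by simp
  also have "\<dots> \<le> edist k x y + edist k y z"
    unfolding edist_L2 by (rule L2_set_triangle_ineq)
  finally show ?thesis .
qed

lemma edist_le_sum: "edist k x y \<le> (\<Sum>j<2*k. \<bar>x j - y j\<bar>)"
  unfolding edist_L2 by (rule L2_set_le_sum_abs)

lemma space_Rspace: "space (Rspace k) = (\<Pi>\<^sub>E j\<in>{..<2*k}. UNIV)"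
  unfolding Rspace_def by (simp add: space_PiM)

lemma edist_meas: "(\<lambda>y. edist k r y) \<in> borel_measurable (Rspace k)"
proof -
  have c: "(\<lambda>y. y j) \<in> borel_measurable (Rspace k)" if "j \<in> {..<2*k}" for j
    unfolding Rspace_def by (rule measurable_component_singleton[OF that])
  have "(\<lambda>y. \<Sum>j<2*k. (r j - y j)\<^sup>2) \<in> borel_measurable (Rspace k)"
    by (intro borel_measurable_sum borel_measurable_power borel_measurable_diff borel_measurable_const c)
  then show ?thesis unfolding edist_def
    by (rule measurable_compose[OF _ borel_measurable_sqrt])
qed

lemma eps_nbhd_sub: "U \<in> sets (Rspace k) \<Longrightarrow> 0 < e \<Longrightarrow> U \<subseteq> eps_nbhd k U e"
proof
  fix x assume U: "U \<in> sets (Rspace k)" and e: "0 < e" and x: "x \<in> U"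
  have "x \<in> space (Rspace k)" using sets.sets_into_space[OF U] x by blast
  moreover have "edist k x x < e" using e edist_self[of k x] by simp
  ultimately show "x \<in> eps_nbhd k U e" unfolding eps_nbhd_def using x by blast
qed

lemma eps_nbhd_mono: "e1 \<le> e2 \<Longrightarrow> eps_nbhd k U e1 \<subseteq> eps_nbhd k U e2"
  unfolding eps_nbhd_def by (auto intro: less_le_trans)

lemma eps_nbhd_nbhd: "eps_nbhd k (eps_nbhd k U e1) e2 \<subseteq> eps_nbhd k U (e1 + e2)"
proof
  fix y assume "y \<in> eps_nbhd k (eps_nbhd k U e1) e2"
  then obtain z x where "y \<in> space (Rspace k)" "x \<in> U" "edist k x z < e1" "edist k z y < e2"
    unfolding eps_nbhd_def by auto
  moreover have "edist k x y \<le> edist k x z + edist k z y" by (rule edist_triangle)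
  ultimately have "edist k x y < e1 + e2" by linarith
  then show "y \<in> eps_nbhd k U (e1 + e2)" unfolding eps_nbhd_def using \<open>y \<in> space (Rspace k)\<close> \<open>x \<in> U\<close> by blast
qed

definition ratpts :: "nat \<Rightarrow> (nat \<Rightarrow> real) set" where
  "ratpts k = (\<lambda>q. \<lambda>j\<in>{..<2*k}. of_rat (q j)) ` (\<Pi>\<^sub>E j\<in>{..<2*k}. UNIV)"

lemma countable_ratpts: "countable (ratpts k)"
  unfolding ratpts_def by (intro countable_image countable_PiE) auto

lemma ratpts_space: "ratpts k \<subseteq> space (Rspace k)"
  unfolding ratpts_def space_Rspace by auto

lemma ratpts_dense:
  assumes y: "y \<in> space (Rspace k)" and d: "0 < \<delta>"
  shows "\<exists>r\<in>ratpts k. edist k r y < \<delta>"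
proof -
  define t where "t = \<delta> / (2 * real k + 1)"
  have t: "0 < t" unfolding t_def using d by simp
  have "\<forall>j. \<exists>q::rat. y j - t < of_rat q \<and> of_rat q < y j + t"
    using t by (intro allI of_rat_dense) simp
  then obtain q where q: "\<And>j. y j - t < of_rat (q j) \<and> of_rat (q j) < y j + t" by metis
  define r where "r = (\<lambda>j\<in>{..<2*k}. of_rat (q j) :: real)"
  have "r \<in> ratpts k" unfolding ratpts_def r_def
    by (rule image_eqI[where x="restrict q {..<2*k}"]) auto
  moreover have "edist k r y < \<delta>"
  proof -
    have "edist k r y \<le> (\<Sum>j<2*k. \<bar>r j - y j\<bar>)" by (rule edist_le_sum)
    also have "\<dots> \<le> (\<Sum>j<2*k. t)"
    proof (rule sum_mono)
      fix j assume "j \<in> {..<2*k}"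
      then have "r j = of_rat (q j)" by (simp add: r_def)
      then show "\<bar>r j - y j\<bar> \<le> t" using q[of j] by (simp add: abs_le_iff)
    qed
    also have "\<dots> = 2 * real k * t" by simp
    also have "\<dots> < \<delta>" unfolding t_def using d by (simp add: field_simps)
    finally show ?thesis .
  qed
  ultimately show ?thesis by blast
qed

lemma eps_nbhd_sets: "eps_nbhd k U e \<in> sets (Rspace k)"
proof -
  define A where "A = (\<lambda>(r, q::rat). if 0 < q \<and> (\<exists>x\<in>U. edist k x r < e - of_rat q)
      then {y \<in> space (Rspace k). edist k r y < of_rat q} else {})"
  have eq: "eps_nbhd k U e = (\<Union>p\<in>ratpts k \<times> UNIV. A p)"
  proof (rule set_eqI)
    fix y
    show "y \<in> eps_nbhd k U e \<longleftrightarrow> y \<in> (\<Union>p\<in>ratpts k \<times> UNIV. A p)"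
    proof
      assume "y \<in> eps_nbhd k U e"
      then obtain x where y: "y \<in> space (Rspace k)" and x: "x \<in> U" "edist k x y < e"
        unfolding eps_nbhd_def by auto
      define t where "t = e - edist k x y"
      have t: "0 < t" unfolding t_def using x by simp
      obtain r where r: "r \<in> ratpts k" "edist k r y < t / 3"
        using ratpts_dense[OF y, of "t/3"] t by auto
      obtain q :: rat where q: "t / 3 < of_rat q" "of_rat q < 2 * t / 3"
        using of_rat_dense[of "t/3" "2*t/3"] t by auto
      have "edist k x r \<le> edist k x y + edist k y r" by (rule edist_triangle)
      then have "edist k x r < e - of_rat q"
        using r q edist_sym[of k y r] unfolding t_def by simp
      moreover have "0 < q" using q t by (metis of_rat_less of_rat_0 order.strict_trans zero_less_divide_iff zero_less_numeral)
      ultimately have "y \<in> A (r, q)" unfolding A_def using x y r q by auto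
      then show "y \<in> (\<Union>p\<in>ratpts k \<times> UNIV. A p)" using r by blast
    next
      assume "y \<in> (\<Union>p\<in>ratpts k \<times> UNIV. A p)"
      then obtain r q x where "y \<in> space (Rspace k)" "x \<in> U" "edist k x r < e - of_rat q" "edist k r y < of_rat q"
        unfolding A_def by (auto split: if_splits)
      moreover have "edist k x y \<le> edist k x r + edist k r y" by (rule edist_triangle)
      ultimately have "edist k x y < e" by linarith
      then show "y \<in> eps_nbhd k U e" unfolding eps_nbhd_def using \<open>y \<in> space (Rspace k)\<close> \<open>x \<in> U\<close> by blast
    qed
  qed
  have "A p \<in> sets (Rspace k)" for p
  proof -
    obtain r q where p: "p = (r, q)" by force
    have "{y \<in> space (Rspace k). edist k r y < of_rat q} \<in> sets (Rspace k)"
      using edist_meas[of k r] by measurable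
    then show ?thesis unfolding A_def p by auto
  qed
  moreover have "countable (ratpts k \<times> (UNIV :: rat set))"
    using countable_ratpts by (intro countable_SIGMA) auto
  ultimately show ?thesis unfolding eq by (intro sets.countable_UN') auto
qed

definition LPc :: "nat \<Rightarrow> (nat \<Rightarrow> real) measure \<Rightarrow> (nat \<Rightarrow> real) measure \<Rightarrow> real \<Rightarrow> bool" where
  "LPc k P Q e \<longleftrightarrow> (\<forall>U \<in> sets (Rspace k).
       measure P U \<le> measure Q (eps_nbhd k U e) + e \<and>
       measure Q U \<le> measure P (eps_nbhd k U e) + e)"

lemma LP_dist_LPc: "LP_dist k P Q = Inf {e. e > 0 \<and> LPc k P Q e}"
  unfolding LP_dist_def LPc_def ..

definition good :: "nat \<Rightarrow> (nat \<Rightarrow> real) measure \<Rightarrow> bool" where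
  "good k P \<longleftrightarrow> prob_space P \<and> sets P = sets (Rspace k)"

lemma good_mono:
  assumes "good k P" "A \<subseteq> B" "B \<in> sets (Rspace k)"
  shows "measure P A \<le> measure P B"
  using assms unfolding good_def
  by (intro finite_measure.finite_measure_mono) (auto simp: prob_space_def)

lemma good_le1: "good k P \<Longrightarrow> measure P A \<le> 1"
  unfolding good_def using prob_space.prob_le_1 measure_notin_sets by (metis zero_le_one)

lemma LPc_sym: "LPc k P Q e \<longleftrightarrow> LPc k Q P e"
  unfolding LPc_def by auto

lemma LP_sym: "LP_dist k P Q = LP_dist k Q P"
  unfolding LP_dist_LPc using LPc_sym by metis

lemma LPc_mono:
  assumes P: "good k P" and Q: "good k Q" and c: "LPc k P Q e" and ee: "e \<le> e'"
  shows "LPc k P Q e'"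
  unfolding LPc_def
proof
  fix U assume U: "U \<in> sets (Rspace k)"
  have "measure Q (eps_nbhd k U e) \<le> measure Q (eps_nbhd k U e')"
    by (rule good_mono[OF Q eps_nbhd_mono[OF ee] eps_nbhd_sets])
  moreover have "measure P (eps_nbhd k U e) \<le> measure P (eps_nbhd k U e')"
    by (rule good_mono[OF P eps_nbhd_mono[OF ee] eps_nbhd_sets])
  ultimately show "measure P U \<le> measure Q (eps_nbhd k U e') + e' \<and> measure Q U \<le> measure P (eps_nbhd k U e') + e'"
    using c U ee unfolding LPc_def by fastforce
qed

lemma LPc_big:
  assumes P: "good k P" and Q: "good k Q" and e: "1 \<le> e"
  shows "LPc k P Q e"
  unfolding LPc_def using good_le1[OF P] good_le1[OF Q] e
  by (smt (verit, best) measure_nonneg)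

lemma LPc_set_ne: "good k P \<Longrightarrow> good k Q \<Longrightarrow> {e. e > 0 \<and> LPc k P Q e} \<noteq> {}"
proof -
  assume "good k P" "good k Q"
  then have "LPc k P Q 1" using LPc_big[of k P Q 1] by simp
  then have "1 \<in> {e. e > 0 \<and> LPc k P Q e}" by simp
  then show ?thesis by blast
qed

lemma LP_nonneg: "good k P \<Longrightarrow> good k Q \<Longrightarrow> 0 \<le> LP_dist k P Q"
  unfolding LP_dist_LPc by (rule cInf_greatest[OF LPc_set_ne]) auto

lemma LP_le:
  assumes r: "0 \<le> r" and c: "\<And>e. r < e \<Longrightarrow> LPc k P Q e"
  shows "LP_dist k P Q \<le> r"
proof -
  have bdd: "bdd_below {e. e > 0 \<and> LPc k P Q e}" by (rule bdd_belowI[of _ 0]) auto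
  have "LP_dist k P Q \<le> e" if e: "r < e" for e
    unfolding LP_dist_LPc by (rule cInf_lower[OF _ bdd]) (use r e c in auto)
  then show ?thesis by (meson dense not_le)
qed

lemma LP_lt_LPc:
  assumes P: "good k P" and Q: "good k Q" and e: "LP_dist k P Q < e"
  shows "LPc k P Q e"
proof -
  obtain e' where "e' \<in> {e. e > 0 \<and> LPc k P Q e}" "e' < e"
    using cInf_lessD[OF LPc_set_ne[OF P Q]] e unfolding LP_dist_LPc by blast
  then show ?thesis using LPc_mono[OF P Q] by auto
qed

lemma LP_le1: "good k P \<Longrightarrow> good k Q \<Longrightarrow> LP_dist k P Q \<le> 1"
  by (rule LP_le) (auto intro: LPc_big)

lemma LP_self: assumes P: "good k P" shows "LP_dist k P P = 0"
proof -
  have "LP_dist k P P \<le> 0"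
  proof (rule LP_le)
    fix e :: real assume e: "0 < e"
    show "LPc k P P e" unfolding LPc_def
    proof
      fix U assume "U \<in> sets (Rspace k)"
      then have "measure P U \<le> measure P (eps_nbhd k U e)"
        by (intro good_mono[OF P eps_nbhd_sub eps_nbhd_sets] e)
      then show "measure P U \<le> measure P (eps_nbhd k U e) + e \<and> measure P U \<le> measure P (eps_nbhd k U e) + e"
        using e by simp
    qed
  qed simp
  then show ?thesis using LP_nonneg[OF P P] by simp
qed

lemma LPc_trans:
  assumes P: "good k P" and Q: "good k Q" and R: "good k R"
    and c1: "LPc k P Q e1" and c2: "LPc k Q R e2"
  shows "LPc k P R (e1 + e2)"
  unfolding LPc_def
proof
  fix U assume U: "U \<in> sets (Rspace k)"
  have "measure P U \<le> measure Q (eps_nbhd k U e1) + e1" using c1 U unfolding LPc_def by blast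
  also have "measure Q (eps_nbhd k U e1) \<le> measure R (eps_nbhd k (eps_nbhd k U e1) e2) + e2"
    using c2 eps_nbhd_sets unfolding LPc_def by blast
  also have "measure R (eps_nbhd k (eps_nbhd k U e1) e2) \<le> measure R (eps_nbhd k U (e1 + e2))"
    by (rule good_mono[OF R eps_nbhd_nbhd eps_nbhd_sets])
  finally have 1: "measure P U \<le> measure R (eps_nbhd k U (e1 + e2)) + (e1 + e2)" by simp
  have "measure R U \<le> measure Q (eps_nbhd k U e2) + e2" using c2 U unfolding LPc_def by blast
  also have "measure Q (eps_nbhd k U e2) \<le> measure P (eps_nbhd k (eps_nbhd k U e2) e1) + e1"
    using c1 eps_nbhd_sets unfolding LPc_def by blast
  also have "measure P (eps_nbhd k (eps_nbhd k U e2) e1) \<le> measure P (eps_nbhd k U (e2 + e1))"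
    by (rule good_mono[OF P eps_nbhd_nbhd eps_nbhd_sets])
  finally have 2: "measure R U \<le> measure P (eps_nbhd k U (e1 + e2)) + (e1 + e2)" by (simp add: add.commute)
  show "measure P U \<le> measure R (eps_nbhd k U (e1 + e2)) + (e1 + e2) \<and>
        measure R U \<le> measure P (eps_nbhd k U (e1 + e2)) + (e1 + e2)" using 1 2 by blast
qed

lemma LP_triangle:
  assumes P: "good k P" and Q: "good k Q" and R: "good k R"
  shows "LP_dist k P R \<le> LP_dist k P Q + LP_dist k Q R"
proof (rule LP_le)
  show "0 \<le> LP_dist k P Q + LP_dist k Q R" using LP_nonneg P Q R by (simp add: add_nonneg_nonneg)
  fix e assume e: "LP_dist k P Q + LP_dist k Q R < e"
  define h where "h = (e - (LP_dist k P Q + LP_dist k Q R)) / 2"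
  have h: "0 < h" unfolding h_def using e by simp
  have "LPc k P Q (LP_dist k P Q + h)" by (rule LP_lt_LPc[OF P Q]) (use h in simp)
  moreover have "LPc k Q R (LP_dist k Q R + h)" by (rule LP_lt_LPc[OF Q R]) (use h in simp)
  ultimately have "LPc k P R ((LP_dist k P Q + h) + (LP_dist k Q R + h))" by (rule LPc_trans[OF P Q R])
  moreover have "(LP_dist k P Q + h) + (LP_dist k Q R + h) = e" unfolding h_def by simp
  ultimately show "LPc k P R e" by simp
qed

lemma comp_meas_R: "F \<in> measurable M (Rspace k) \<Longrightarrow> j < 2 * k \<Longrightarrow> (\<lambda>x. F x j) \<in> borel_measurable M"
  unfolding Rspace_def by (rule measurable_compose[OF _ measurable_component_singleton]) auto

lemma edist_meas2:
  assumes F: "F \<in> measurable M (Rspace k)" and G: "G \<in> measurable M (Rspace k)"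
  shows "(\<lambda>x. edist k (F x) (G x)) \<in> borel_measurable M"
proof -
  have "(\<lambda>x. \<Sum>j<2*k. (F x j - G x j)\<^sup>2) \<in> borel_measurable M"
    by (intro borel_measurable_sum borel_measurable_power borel_measurable_diff comp_meas_R[OF F] comp_meas_R[OF G]) auto
  then show ?thesis unfolding edist_def
    by (rule measurable_compose[OF _ borel_measurable_sqrt])
qed

lemma good_distr: "prob_space M \<Longrightarrow> F \<in> measurable M (Rspace k) \<Longrightarrow> good k (distr M (Rspace k) F)"
  unfolding good_def by (auto intro: prob_space.prob_space_distr)

lemma L1_LPc_half:
  assumes M: "prob_space M" and F: "F \<in> measurable M (Rspace k)" and G: "G \<in> measurable M (Rspace k)"
    and int: "integrable M (\<lambda>x. edist k (F x) (G x))"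
    and eta: "(\<integral>x. edist k (F x) (G x) \<partial>M) \<le> \<eta>"
    and r: "0 < r" "\<eta> \<le> r\<^sup>2" and e: "r < e" and U: "U \<in> sets (Rspace k)"
  shows "measure (distr M (Rspace k) F) U \<le> measure (distr M (Rspace k) G) (eps_nbhd k U e) + e"
proof -
  interpret P: prob_space M by (rule M)
  let ?B = "{x \<in> space M. e \<le> edist k (F x) (G x)}"
  have Bs: "?B \<in> sets M" using edist_meas2[OF F G] by measurable
  have FU: "F -` U \<inter> space M \<in> sets M" using measurable_sets[OF F U] .
  have GN: "G -` eps_nbhd k U e \<inter> space M \<in> sets M" using measurable_sets[OF G eps_nbhd_sets] .
  have sub: "F -` U \<inter> space M \<subseteq> (G -` eps_nbhd k U e \<inter> space M) \<union> ?B"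
  proof
    fix x assume x: "x \<in> F -` U \<inter> space M"
    show "x \<in> (G -` eps_nbhd k U e \<inter> space M) \<union> ?B"
    proof (cases "e \<le> edist k (F x) (G x)")
      case False
      have "G x \<in> space (Rspace k)" using x measurable_space[OF G, of x] by blast
      moreover have "F x \<in> U" "edist k (F x) (G x) < e" using x False by auto
      ultimately have "G x \<in> eps_nbhd k U e"
        unfolding eps_nbhd_def by blast
      then show ?thesis using x by blast
    qed (use x in blast)
  qed
  have "measure (distr M (Rspace k) F) U = measure M (F -` U \<inter> space M)"
    by (rule measure_distr[OF F U])
  also have "\<dots> \<le> measure M ((G -` eps_nbhd k U e \<inter> space M) \<union> ?B)"
    by (rule P.finite_measure_mono[OF sub]) (use GN Bs in auto)
  also have "\<dots> \<le> measure M (G -` eps_nbhd k U e \<inter> space M) + measure M ?B"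
    by (rule measure_Un_le[OF GN Bs])
  also have "measure M (G -` eps_nbhd k U e \<inter> space M) = measure (distr M (Rspace k) G) (eps_nbhd k U e)"
    by (rule measure_distr[symmetric, OF G eps_nbhd_sets])
  also have "measure M ?B \<le> (\<integral>x. edist k (F x) (G x) \<partial>M) / e"
    by (rule integral_Markov_inequality_measure[OF int Bs]) (use r e in \<open>auto simp: edist_nonneg\<close>)
  also have "\<dots> \<le> \<eta> / e" using eta r e by (simp add: divide_right_mono)
  also have "\<dots> \<le> e"
  proof -
    have "\<eta> \<le> e * e" using r e by (smt (verit) mult_strict_mono power2_eq_square)
    then show ?thesis using r e by (simp add: field_simps)
  qed
  finally show ?thesis by simp
qed

lemma L1_LP:
  assumes M: "prob_space M" and F: "F \<in> measurable M (Rspace k)" and G: "G \<in> measurable M (Rspace k)"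
    and int: "integrable M (\<lambda>x. edist k (F x) (G x))"
    and eta: "(\<integral>x. edist k (F x) (G x) \<partial>M) \<le> \<eta>"
    and r: "0 < r" "\<eta> \<le> r\<^sup>2"
  shows "LP_dist k (distr M (Rspace k) F) (distr M (Rspace k) G) \<le> r"
proof (rule LP_le)
  show "0 \<le> r" using r by simp
  fix e assume e: "r < e"
  have int': "integrable M (\<lambda>x. edist k (G x) (F x))" using int by (simp add: edist_sym)
  have eta': "(\<integral>x. edist k (G x) (F x) \<partial>M) \<le> \<eta>" using eta by (simp add: edist_sym)
  show "LPc k (distr M (Rspace k) F) (distr M (Rspace k) G) e"
    unfolding LPc_def
    using L1_LPc_half[OF M F G int eta r e] L1_LPc_half[OF M G F int' eta' r e] by blast
qed

definition cube :: "nat \<Rightarrow> (nat \<Rightarrow> real) set" where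
  "cube k = {y \<in> space (Rspace k). \<forall>j<2*k. \<bar>y j\<bar> \<le> 1}"

definition gidx :: "nat \<Rightarrow> real \<Rightarrow> nat" where
  "gidx m t = min (2 * m - 1) (nat \<lfloor>(t + 1) * m\<rfloor>)"

definition cell :: "nat \<Rightarrow> nat \<Rightarrow> (nat \<Rightarrow> nat) \<Rightarrow> (nat \<Rightarrow> real) set" where
  "cell k m c = {y \<in> cube k. \<forall>j<2*k. gidx m (y j) = c j}"

definition Idx :: "nat \<Rightarrow> nat \<Rightarrow> (nat \<Rightarrow> nat) set" where
  "Idx k m = (\<Pi>\<^sub>E j\<in>{..<2*k}. {..<2*m})"

lemma gidx_bounds:
  assumes m: "1 \<le> m" and t: "\<bar>t\<bar> \<le> 1"
  shows "real (gidx m t) \<le> (t + 1) * m" "(t + 1) * m \<le> real (gidx m t) + 1" "gidx m t < 2 * m"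
proof -
  have tm: "0 \<le> (t + 1) * m" using t by simp
  have tm2: "(t + 1) * m \<le> 2 * m" using t m by (simp add: mult_right_mono)
  have fl0: "0 \<le> \<lfloor>(t + 1) * m\<rfloor>" using tm by simp
  have fl1: "of_int \<lfloor>(t + 1) * m\<rfloor> \<le> (t + 1) * m" by simp
  have fl2: "(t + 1) * m < of_int \<lfloor>(t + 1) * m\<rfloor> + 1" by linarith
  show "gidx m t < 2 * m" unfolding gidx_def using m by simp
  show "real (gidx m t) \<le> (t + 1) * m"
  proof (cases "nat \<lfloor>(t + 1) * m\<rfloor> \<le> 2 * m - 1")
    case True then show ?thesis unfolding gidx_def using fl0 fl1 by simp
  next
    case False
    then have "real (2 * m - 1) \<le> of_int \<lfloor>(t + 1) * m\<rfloor>" using fl0 by linarith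
    moreover have "gidx m t = 2 * m - 1" unfolding gidx_def using False by simp
    ultimately show ?thesis using fl1 by linarith
  qed
  show "(t + 1) * m \<le> real (gidx m t) + 1"
  proof (cases "nat \<lfloor>(t + 1) * m\<rfloor> \<le> 2 * m - 1")
    case True then show ?thesis unfolding gidx_def using fl0 fl2 by simp
  next
    case False
    then show ?thesis unfolding gidx_def using tm2 m by (simp add: of_nat_diff)
  qed
qed

lemma cell_close:
  assumes m: "1 \<le> m" and x: "x \<in> cell k m c" and y: "y \<in> cell k m c"
  shows "edist k x y \<le> 2 * k / m"
proof -
  have "\<bar>x j - y j\<bar> \<le> 1 / m" if j: "j < 2 * k" for j
  proof -
    have xb: "\<bar>x j\<bar> \<le> 1" and yb: "\<bar>y j\<bar> \<le> 1" using x y j unfolding cell_def cube_def by auto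
    have eq: "gidx m (x j) = gidx m (y j)" using x y j unfolding cell_def by auto
    have "\<bar>(x j + 1) * m - (y j + 1) * m\<bar> \<le> 1"
      using gidx_bounds[OF m xb] gidx_bounds[OF m yb] eq by linarith
    moreover have "(x j + 1) * m - (y j + 1) * m = (x j - y j) * m" by (simp add: algebra_simps)
    ultimately have "\<bar>x j - y j\<bar> * m \<le> 1" by (simp add: abs_mult)
    then show ?thesis using m by (simp add: field_simps)
  qed
  then have "edist k x y \<le> (\<Sum>j<2*k. 1 / m)"
    using edist_le_sum[of k x y] by (smt (verit, best) lessThan_iff sum_mono)
  then show ?thesis by simp
qed

lemma cube_sets: "cube k \<in> sets (Rspace k)"
proof -
  have "cube k = space (Rspace k) \<inter> (\<Inter>j<2*k. {y \<in> space (Rspace k). \<bar>y j\<bar> \<le> 1})"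
    unfolding cube_def by auto
  moreover have "{y \<in> space (Rspace k). \<bar>y j\<bar> \<le> 1} \<in> sets (Rspace k)" if "j < 2*k" for j
    using comp_meas_R[OF measurable_ident_sets[OF refl] that] by measurable
  ultimately show ?thesis by auto
qed

lemma cell_sets: "cell k m c \<in> sets (Rspace k)"
proof -
  have "cell k m c = {y \<in> space (Rspace k). y \<in> cube k \<and> (\<forall>j\<in>{..<2*k}. gidx m (y j) = c j)}"
    unfolding cell_def cube_def by auto
  moreover have "{y \<in> space (Rspace k). gidx m (y j) = c j} \<in> sets (Rspace k)" if "j < 2*k" for j
  proof -
    have g: "(\<lambda>y. y j) \<in> borel_measurable (Rspace k)" using comp_meas_R[OF measurable_ident_sets[OF refl] that] by simp
    have "(\<lambda>y. gidx m (y j)) \<in> measurable (Rspace k) (count_space UNIV)"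
      unfolding gidx_def using g by measurable
    then show ?thesis by measurable
  qed
  ultimately show ?thesis using cube_sets
    by (simp only:) (intro sets.sets_Collect_conj sets.sets_Collect_finite_All, auto simp: sets.Int_space_eq1)
qed

lemma finite_Idx: "finite (Idx k m)"
  unfolding Idx_def by (intro finite_PiE) auto

lemma cube_in_cell:
  assumes m: "1 \<le> m" and y: "y \<in> cube k"
  shows "(\<lambda>j\<in>{..<2*k}. gidx m (y j)) \<in> Idx k m" "y \<in> cell k m (\<lambda>j\<in>{..<2*k}. gidx m (y j))"
proof -
  show "(\<lambda>j\<in>{..<2*k}. gidx m (y j)) \<in> Idx k m"
    unfolding Idx_def using gidx_bounds(3)[OF m] y unfolding cube_def by auto
  show "y \<in> cell k m (\<lambda>j\<in>{..<2*k}. gidx m (y j))" unfolding cell_def using y by auto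
qed

lemma cell_disj:
  assumes c: "c \<in> Idx k m" and c': "c' \<in> Idx k m" and ne: "c \<noteq> c'"
  shows "cell k m c \<inter> cell k m c' = {}"
proof (rule ccontr)
  assume "cell k m c \<inter> cell k m c' \<noteq> {}"
  then obtain y where "y \<in> cell k m c" "y \<in> cell k m c'" by blast
  then have "\<And>j. j \<in> {..<2*k} \<Longrightarrow> c j = c' j" unfolding cell_def by auto
  then have "c = c'" using c c' unfolding Idx_def by (intro PiE_ext) auto
  then show False using ne by simp
qed

lemma cell_sub_cube: "cell k m c \<subseteq> cube k"
  unfolding cell_def by auto

lemma cube_sub_space: "cube k \<subseteq> space (Rspace k)"
  unfolding cube_def by auto

lemma good_space: "good k P \<Longrightarrow> space P = space (Rspace k)"
  unfolding good_def by (metis sets_eq_imp_space_eq)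

lemma cell_half:
  fixes e \<eta> :: real
  assumes P: "good k P" and Q: "good k Q" and Pc: "measure P (cube k) = 1" and m: "1 \<le> m"
    and close: "\<forall>c\<in>Idx k m. measure P (cell k m c) \<le> measure Q (cell k m c) + \<eta>"
    and eta: "0 \<le> \<eta>" and me: "real (2 * k) / real m < e" and ce: "card (Idx k m) * \<eta> \<le> e"
    and U: "U \<in> sets (Rspace k)"
  shows "measure P U \<le> measure Q (eps_nbhd k U e) + e"
proof -
  interpret PP: prob_space P using P unfolding good_def by blast
  interpret QQ: prob_space Q using Q unfolding good_def by blast
  have sP: "sets P = sets (Rspace k)" and sQ: "sets Q = sets (Rspace k)" using P Q unfolding good_def by auto
  define I where "I = {c \<in> Idx k m. cell k m c \<inter> U \<noteq> {}}"
  define W where "W = (\<Union>c\<in>I. cell k m c)"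
  have finI: "finite I" unfolding I_def using finite_Idx by simp
  have Ws: "W \<in> sets (Rspace k)" unfolding W_def using finI cell_sets by auto
  have Usp: "U \<subseteq> space (Rspace k)" using sets.sets_into_space[OF U] .
  have sub: "U \<subseteq> W \<union> (space (Rspace k) - cube k)"
  proof
    fix y assume y: "y \<in> U"
    show "y \<in> W \<union> (space (Rspace k) - cube k)"
    proof (cases "y \<in> cube k")
      case True
      let ?c = "\<lambda>j\<in>{..<2*k}. gidx m (y j)"
      have "?c \<in> Idx k m" "y \<in> cell k m ?c" using cube_in_cell[OF m True] by auto
      then have "?c \<in> I" using y unfolding I_def by blast
      then show ?thesis using \<open>y \<in> cell k m ?c\<close> unfolding W_def by blast
    qed (use y Usp in blast)
  qed
  have compl0: "measure P (space (Rspace k) - cube k) = 0"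
  proof -
    have "measure P (space P - cube k) = measure P (space P) - measure P (cube k)"
      by (rule PP.finite_measure_compl) (use sP cube_sets in simp)
    then show ?thesis using Pc PP.prob_space good_space[OF P] by simp
  qed
  have "measure P U \<le> measure P (W \<union> (space (Rspace k) - cube k))"
    by (rule PP.finite_measure_mono[OF sub]) (use sP Ws cube_sets in auto)
  also have "\<dots> \<le> measure P W + measure P (space (Rspace k) - cube k)"
    by (rule measure_Un_le) (use sP Ws cube_sets in auto)
  also have "\<dots> = measure P W" using compl0 by simp
  also have "measure P W \<le> (\<Sum>c\<in>I. measure P (cell k m c))"
    unfolding W_def by (rule measure_UNION_le[OF finI]) (use sP cell_sets in auto)
  also have "\<dots> \<le> (\<Sum>c\<in>I. measure Q (cell k m c) + \<eta>)"
    by (rule sum_mono) (use close in \<open>auto simp: I_def\<close>)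
  also have "\<dots> = (\<Sum>c\<in>I. measure Q (cell k m c)) + card I * \<eta>" by (simp add: sum.distrib)
  also have "(\<Sum>c\<in>I. measure Q (cell k m c)) = measure Q W"
    unfolding W_def
  proof (rule QQ.finite_measure_finite_Union[symmetric, OF finI])
    show "(\<lambda>c. cell k m c) ` I \<subseteq> sets Q" using sQ cell_sets by auto
    show "disjoint_family_on (\<lambda>c. cell k m c) I"
      unfolding disjoint_family_on_def I_def using cell_disj by blast
  qed
  also have "measure Q W \<le> measure Q (eps_nbhd k U e)"
  proof (rule QQ.finite_measure_mono)
    show "eps_nbhd k U e \<in> sets Q" using sQ eps_nbhd_sets by simp
    show "W \<subseteq> eps_nbhd k U e"
    proof
      fix y assume "y \<in> W"
      then obtain c where c: "c \<in> I" "y \<in> cell k m c" unfolding W_def by blast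
      then obtain x where x: "x \<in> cell k m c" "x \<in> U" unfolding I_def by blast
      have "edist k x y \<le> real (2 * k) / real m" using cell_close[OF m x(1) c(2)] by simp
      then have "edist k x y < e" using me by simp
      moreover have "y \<in> space (Rspace k)" using c(2) cell_sub_cube cube_sub_space by blast
      ultimately show "y \<in> eps_nbhd k U e" unfolding eps_nbhd_def using x by blast
    qed
  qed
  also have "card I * \<eta> \<le> e"
  proof -
    have "card I \<le> card (Idx k m)" unfolding I_def using finite_Idx by (intro card_mono) auto
    then have "card I * \<eta> \<le> card (Idx k m) * \<eta>" using eta by (simp add: mult_right_mono)
    then show ?thesis using ce by simp
  qed
  finally show ?thesis by simp
qed

definition cls :: "nat \<Rightarrow> nat \<Rightarrow> nat \<Rightarrow> (nat \<Rightarrow> real) measure \<Rightarrow> (nat \<Rightarrow> nat) \<Rightarrow> int" where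
  "cls k m L P = (\<lambda>c\<in>Idx k m. \<lfloor>measure P (cell k m c) * L\<rfloor>)"

lemma cls_range:
  assumes P: "good k P"
  shows "cls k m L P \<in> (\<Pi>\<^sub>E c\<in>Idx k m. {0..int L})"
proof -
  interpret PP: prob_space P using P unfolding good_def by blast
  have "0 \<le> \<lfloor>measure P (cell k m c) * L\<rfloor>" for c by simp
  moreover have "\<lfloor>measure P (cell k m c) * L\<rfloor> \<le> int L" for c
  proof -
    have "measure P (cell k m c) * L \<le> 1 * real L" by (intro mult_right_mono) auto
    then show ?thesis by linarith
  qed
  ultimately show ?thesis unfolding cls_def by auto
qed

lemma finite_cls_range: "finite (\<Pi>\<^sub>E c\<in>Idx k m. {0..int L})"
  using finite_Idx by (intro finite_PiE) auto

lemma cls_eq_LP: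
  assumes P: "good k P" and Q: "good k Q" and Pc: "measure P (cube k) = 1" and Qc: "measure Q (cube k) = 1"
    and m: "1 \<le> m" and L: "0 < L" and me: "real (2 * k) / real m < e" and ce: "real (card (Idx k m)) / real L < e"
    and eq: "cls k m L P = cls k m L Q"
  shows "LP_dist k P Q \<le> e"
proof (rule LP_le)
  show "0 \<le> e" using me by (smt (verit) divide_nonneg_nonneg of_nat_0_le_iff)
  fix e' assume e': "e < e'"
  have close: "\<bar>measure P (cell k m c) - measure Q (cell k m c)\<bar> \<le> 1 / L" if c: "c \<in> Idx k m" for c
  proof -
    have "\<lfloor>measure P (cell k m c) * L\<rfloor> = \<lfloor>measure Q (cell k m c) * L\<rfloor>"
    proof -
      have "cls k m L P c = cls k m L Q c" using eq by simp
      then show ?thesis using c unfolding cls_def by simp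
    qed
    then have "\<bar>measure P (cell k m c) * L - measure Q (cell k m c) * L\<bar> \<le> 1" by linarith
    then have "\<bar>measure P (cell k m c) - measure Q (cell k m c)\<bar> * L \<le> 1"
      by (simp add: abs_mult left_diff_distrib[symmetric])
    then show ?thesis using L by (simp add: field_simps)
  qed
  have me': "real (2 * k) / real m < e'" using me e' by simp
  have ce': "real (card (Idx k m)) * (1 / real L) \<le> e'" using ce e' by simp
  show "LPc k P Q e'" unfolding LPc_def
  proof
    fix U assume U: "U \<in> sets (Rspace k)"
    have c1: "\<forall>c\<in>Idx k m. measure P (cell k m c) \<le> measure Q (cell k m c) + 1 / real L"
    proof
      fix c assume "c \<in> Idx k m"
      from close[OF this] show "measure P (cell k m c) \<le> measure Q (cell k m c) + 1 / real L" by linarith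
    qed
    have c2: "\<forall>c\<in>Idx k m. measure Q (cell k m c) \<le> measure P (cell k m c) + 1 / real L"
    proof
      fix c assume "c \<in> Idx k m"
      from close[OF this] show "measure Q (cell k m c) \<le> measure P (cell k m c) + 1 / real L" by linarith
    qed
    have "measure P U \<le> measure Q (eps_nbhd k U e') + e'"
      by (rule cell_half[OF P Q Pc m c1 _ me' ce' U]) simp
    moreover have "measure Q U \<le> measure P (eps_nbhd k U e') + e'"
      by (rule cell_half[OF Q P Qc m c2 _ me' ce' U]) simp
    ultimately show "measure P U \<le> measure Q (eps_nbhd k U e') + e' \<and> measure Q U \<le> measure P (eps_nbhd k U e') + e'"
      by blast
  qed
qed

lemma total_bdd:
  assumes e: "0 < e"
  shows "\<exists>K (g :: (nat \<Rightarrow> real) measure \<Rightarrow> (nat \<Rightarrow> nat) \<Rightarrow> int). finite K \<and>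
     (\<forall>P. good k P \<longrightarrow> g P \<in> K) \<and>
     (\<forall>P Q. good k P \<longrightarrow> good k Q \<longrightarrow> measure P (cube k) = 1 \<longrightarrow> measure Q (cube k) = 1 \<longrightarrow>
        g P = g Q \<longrightarrow> LP_dist k P Q \<le> e)"
proof -
  define m where "m = nat \<lceil>2 * k / e\<rceil> + 1"
  have m1: "1 \<le> m" unfolding m_def by simp
  have me: "real (2 * k) / real m < e"
  proof -
    have "2 * k / e < m" unfolding m_def by linarith
    then have "2 * k < m * e" using e by (simp add: field_simps)
    then show ?thesis using m1 by (simp add: field_simps)
  qed
  define L where "L = nat \<lceil>card (Idx k m) / e\<rceil> + 1"
  have L0: "0 < L" unfolding L_def by simp
  have ce: "real (card (Idx k m)) / real L < e"
  proof -
    have "card (Idx k m) / e < L" unfolding L_def by linarith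
    then have "card (Idx k m) < L * e" using e by (simp add: field_simps)
    then show ?thesis using L0 by (simp add: field_simps)
  qed
  show ?thesis
    using cls_range finite_cls_range cls_eq_LP[OF _ _ _ _ m1 L0 me ce]
    by (intro exI[of _ "\<Pi>\<^sub>E c\<in>Idx k m. {0..int L}"] exI[of _ "cls k m L"]) blast
qed

definition prof :: "nat \<Rightarrow> (nat \<Rightarrow> 'a \<Rightarrow> real) \<Rightarrow> (('a \<Rightarrow> real) \<Rightarrow> ('a \<Rightarrow> real)) \<Rightarrow> 'a \<Rightarrow> nat \<Rightarrow> real" where
  "prof k v B x = (\<lambda>j\<in>{..<2*k}. if j < k then v j x else B (v (j - k)) x)"

lemma S_k_alt: "S_k M B k = {distr M (Rspace k) (prof k v B) | v.
       \<forall>j<k. v j \<in> borel_measurable M \<and> (\<forall>x\<in>space M. -1 \<le> v j x \<and> v j x \<le> 1)}"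
  unfolding S_k_def prof_def ..

lemma prof_space: "prof k v B x \<in> space (Rspace k)"
  unfolding prof_def space_Rspace by auto

lemma prof_cube:
  assumes "\<And>j. j < k \<Longrightarrow> \<bar>v j x\<bar> \<le> 1" "\<And>j. j < k \<Longrightarrow> \<bar>B (v j) x\<bar> \<le> 1"
  shows "prof k v B x \<in> cube k"
  unfolding cube_def using prof_space[of k v B x] assms by (auto simp: prof_def)

lemma distr_cube:
  assumes M: "prob_space M" and F: "F \<in> measurable M (Rspace k)" and c: "\<And>x. x \<in> space M \<Longrightarrow> F x \<in> cube k"
  shows "measure (distr M (Rspace k) F) (cube k) = 1"
proof -
  have "measure (distr M (Rspace k) F) (cube k) = measure M (F -` cube k \<inter> space M)"
    by (rule measure_distr[OF F cube_sets])
  also have "F -` cube k \<inter> space M = space M" using c by auto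
  finally show ?thesis using prob_space.prob_space[OF M] by simp
qed

context towerL begin

abbreviation "Mi i \<equiv> uniform_count_measure {..<n i}"
abbreviation "Bi i \<equiv> adj_op (n i) (E i) (d i)"
abbreviation "A \<equiv> tower_op \<nu>"

lemma Mi_prob: "prob_space (Mi i)"
  using n_pos[of i] by (intro prob_space_uniform_count_measure) auto

lemma space_Mi: "space (Mi i) = {..<n i}"
  by (simp add: space_uniform_count_measure)

lemma Mi_meas:
  assumes "F \<in> space (Mi i) \<rightarrow> space N"
  shows "F \<in> measurable (Mi i) N"
proof -
  have "F \<in> measurable (count_space {..<n i}) N"
    using assms space_Mi by (simp add: measurable_count_space_eq1)
  then show ?thesis
    using measurable_cong_sets[OF sets_uniform_count_measure_count_space refl, of "{..<n i}" N] by simp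
qed

lemma adj_bound:
  assumes u: "\<forall>c<n i. \<bar>u c\<bar> \<le> 1" and c: "c < n i"
  shows "\<bar>adj_op (n i) (E i) (d i) u c\<bar> \<le> 1"
proof -
  have "\<bar>\<Sum>j\<in>{j. j < n i \<and> E i j c}. u j\<bar> \<le> (\<Sum>j\<in>{j. j < n i \<and> E i j c}. \<bar>u j\<bar>)" by (rule sum_abs)
  also have "\<dots> \<le> (\<Sum>j\<in>{j. j < n i \<and> E i j c}. 1)" by (rule sum_mono) (use u in auto)
  also have "\<dots> = d i" using card_nbrs[OF c] unfolding nbrs_sym by simp
  finally have S: "\<bar>\<Sum>j\<in>{j. j < n i \<and> E i j c}. u j\<bar> \<le> real (d i)" .
  have dp: "0 < real (d i)" using d_pos[of i] by simp
  have "\<bar>(\<Sum>j\<in>{j. j < n i \<and> E i j c}. u j) / real (d i)\<bar> = \<bar>\<Sum>j\<in>{j. j < n i \<and> E i j c}. u j\<bar> / real (d i)"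
    using dp by (simp add: abs_divide)
  also have "\<dots> \<le> real (d i) / real (d i)" by (rule divide_right_mono[OF S]) (use dp in simp)
  also have "\<dots> = 1" using dp by simp
  finally show ?thesis unfolding adj_op_def .
qed

lemma prof_meas_fin: "prof k v (Bi i) \<in> measurable (Mi i) (Rspace k)"
  by (rule Mi_meas) (simp add: prof_space)

lemma prof_meas_inf:
  assumes v: "\<And>j. j < k \<Longrightarrow> v j \<in> borel_measurable \<mu>"
  shows "prof k v A \<in> measurable \<mu> (Rspace k)"
proof -
  have "(\<lambda>x. if j < k then v j x else A (v (j - k)) x) \<in> borel_measurable \<mu>" if "j \<in> {..<2*k}" for j
  proof (cases "j < k")
    case True then show ?thesis using v by simp
  next
    case False
    then have "j - k < k" using that by auto
    then show ?thesis using False tower_op_meas[OF v] by simp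
  qed
  then show ?thesis unfolding prof_def Rspace_def by (rule measurable_restrict)
qed

definition Sfin where "Sfin i k = S_k (Mi i) (Bi i) k"
definition Sinf where "Sinf k = S_k \<mu> A k"

lemma Sfin_good:
  assumes "P \<in> Sfin i k"
  shows "good k P \<and> measure P (cube k) = 1"
proof -
  obtain v where P: "P = distr (Mi i) (Rspace k) (prof k v (Bi i))"
    and v: "\<forall>j<k. (\<forall>x\<in>space (Mi i). -1 \<le> v j x \<and> v j x \<le> 1)"
    using assms unfolding Sfin_def S_k_alt by auto
  have "good k P" unfolding P by (rule good_distr[OF Mi_prob prof_meas_fin])
  moreover have "measure P (cube k) = 1" unfolding P
  proof (rule distr_cube[OF Mi_prob prof_meas_fin])
    fix x assume x: "x \<in> space (Mi i)"
    show "prof k v (Bi i) x \<in> cube k"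
    proof (rule prof_cube)
      show "\<bar>v j x\<bar> \<le> 1" if "j < k" for j using v x that by (simp add: abs_le_iff)
      show "\<bar>Bi i (v j) x\<bar> \<le> 1" if "j < k" for j
        using adj_bound[of i "v j" x] v x that space_Mi by (auto simp: abs_le_iff)
    qed
  qed
  ultimately show ?thesis by simp
qed

lemma Sinf_good:
  assumes "P \<in> Sinf k"
  shows "good k P \<and> measure P (cube k) = 1"
proof -
  obtain v where P: "P = distr \<mu> (Rspace k) (prof k v A)"
    and v: "\<forall>j<k. v j \<in> borel_measurable \<mu> \<and> (\<forall>x\<in>space \<mu>. -1 \<le> v j x \<and> v j x \<le> 1)"
    using assms unfolding Sinf_def S_k_alt by auto
  have pm: "prof k v A \<in> measurable \<mu> (Rspace k)" by (rule prof_meas_inf) (use v in auto)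
  have "good k P" unfolding P by (rule good_distr[OF mu_prob pm])
  moreover have "measure P (cube k) = 1" unfolding P
  proof (rule distr_cube[OF mu_prob pm])
    fix x assume x: "x \<in> space \<mu>"
    show "prof k v A x \<in> cube k"
    proof (rule prof_cube)
      show "\<bar>v j x\<bar> \<le> 1" if "j < k" for j using v x that by (simp add: abs_le_iff)
      show "\<bar>A (v j) x\<bar> \<le> 1" if "j < k" for j
        using tower_op_bound[of x "v j" 1] v x that mu_space by (auto simp: abs_le_iff)
    qed
  qed
  ultimately show ?thesis by simp
qed

lemma pullback:
  assumes u: "\<forall>j<k. \<forall>c<n i. \<bar>u j c\<bar> \<le> 1"
  shows "distr \<mu> (Rspace k) (prof k (\<lambda>j x. u j (x i)) A) = distr (Mi i) (Rspace k) (prof k u (Bi i))"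
    and "distr \<mu> (Rspace k) (prof k (\<lambda>j x. u j (x i)) A) \<in> Sinf k"
proof -
  let ?F = "prof k u (Bi i)"
  have eq: "prof k (\<lambda>j x. u j (x i)) A x = ?F (x i)" if x: "x \<in> space \<mu>" for x
    using x mu_space tower_op_cyl unfolding prof_def by auto
  have "distr \<mu> (Rspace k) (prof k (\<lambda>j x. u j (x i)) A) = distr \<mu> (Rspace k) (?F \<circ> (\<lambda>x. x i))"
    by (rule distr_cong) (use eq in auto)
  also have "\<dots> = distr (distr \<mu> (count_space {..<n i}) (\<lambda>x. x i)) (Rspace k) ?F"
  proof (rule distr_distr[symmetric, OF _ coord_meas_fin])
    show "?F \<in> measurable (count_space {..<n i}) (Rspace k)"
      by (simp add: measurable_count_space_eq1 prof_space)
  qed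
  also have "\<dots> = distr (Mi i) (Rspace k) ?F" unfolding mu_proj ..
  finally show "distr \<mu> (Rspace k) (prof k (\<lambda>j x. u j (x i)) A) = distr (Mi i) (Rspace k) ?F" .
  have "\<forall>j<k. (\<lambda>x. u j (x i)) \<in> borel_measurable \<mu> \<and> (\<forall>x\<in>space \<mu>. -1 \<le> u j (x i) \<and> u j (x i) \<le> 1)"
  proof (intro allI impI conjI ballI)
    fix j assume j: "j < k"
    show "(\<lambda>x. u j (x i)) \<in> borel_measurable \<mu>" by (rule coord_fun_meas) simp
    fix x assume "x \<in> space \<mu>"
    then have "x i < n i" using mu_space V_lt by simp
    then show "-1 \<le> u j (x i)" "u j (x i) \<le> 1" using u j by (auto simp: abs_le_iff)
  qed
  then show "distr \<mu> (Rspace k) (prof k (\<lambda>j x. u j (x i)) A) \<in> Sinf k"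
    unfolding Sinf_def S_k_alt by blast
qed

lemma Sfin_sub: "Sfin i k \<subseteq> Sinf k"
proof
  fix P assume "P \<in> Sfin i k"
  then obtain v where P: "P = distr (Mi i) (Rspace k) (prof k v (Bi i))"
    and v: "\<forall>j<k. (\<forall>x\<in>space (Mi i). -1 \<le> v j x \<and> v j x \<le> 1)"
    using \<open>P \<in> Sfin i k\<close> unfolding Sfin_def S_k_alt by auto
  have u: "\<forall>j<k. \<forall>c<n i. \<bar>v j c\<bar> \<le> 1" using v space_Mi by (auto simp: abs_le_iff)
  show "P \<in> Sinf k" using pullback[OF u] P by simp
qed

end

context towerL begin

lemma prof_comp_L1:
  fixes v w :: "nat \<Rightarrow> (nat \<Rightarrow> nat) \<Rightarrow> real"
  assumes v: "\<And>j. j < k \<Longrightarrow> v j \<in> borel_measurable \<mu> \<and> (\<forall>x\<in>V. \<bar>v j x\<bar> \<le> 1)"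
      and w: "\<And>j. j < k \<Longrightarrow> w j \<in> borel_measurable \<mu> \<and> (\<forall>x\<in>V. \<bar>w j x\<bar> \<le> 1)"
      and c: "\<And>j. j < k \<Longrightarrow> (\<integral>x. \<bar>v j x - w j x\<bar> \<partial>\<mu>) \<le> \<delta>"
      and j: "j < 2 * k"
  shows "integrable \<mu> (\<lambda>x. \<bar>prof k v A x j - prof k w A x j\<bar>)"
    and "(\<integral>x. \<bar>prof k v A x j - prof k w A x j\<bar> \<partial>\<mu>) \<le> \<delta>"
proof -
  have pv: "prof k v A \<in> measurable \<mu> (Rspace k)" by (rule prof_meas_inf) (use v in auto)
  have pw: "prof k w A \<in> measurable \<mu> (Rspace k)" by (rule prof_meas_inf) (use w in auto)
  have m: "(\<lambda>x. \<bar>prof k v A x j - prof k w A x j\<bar>) \<in> borel_measurable \<mu>"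
    using comp_meas_R[OF pv j] comp_meas_R[OF pw j] by measurable
  have b: "\<forall>x\<in>V. \<bar>\<bar>prof k v A x j - prof k w A x j\<bar>\<bar> \<le> 2"
  proof
    fix x assume x: "x \<in> V"
    have "prof k v A x \<in> cube k"
      by (rule prof_cube) (use v x tower_op_bound[OF x] in auto)
    moreover have "prof k w A x \<in> cube k"
      by (rule prof_cube) (use w x tower_op_bound[OF x] in auto)
    ultimately show "\<bar>\<bar>prof k v A x j - prof k w A x j\<bar>\<bar> \<le> 2" using j unfolding cube_def by fastforce
  qed
  show "integrable \<mu> (\<lambda>x. \<bar>prof k v A x j - prof k w A x j\<bar>)" by (rule integrable_mu[OF m b])
  show "(\<integral>x. \<bar>prof k v A x j - prof k w A x j\<bar> \<partial>\<mu>) \<le> \<delta>"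
  proof (cases "j < k")
    case True
    then show ?thesis using c[OF True] j unfolding prof_def by simp
  next
    case False
    then have j': "j - k < k" using j by simp
    have "(\<integral>x. \<bar>prof k v A x j - prof k w A x j\<bar> \<partial>\<mu>) = (\<integral>x. \<bar>A (v (j - k)) x - A (w (j - k)) x\<bar> \<partial>\<mu>)"
      using False j unfolding prof_def by simp
    also have "\<dots> \<le> (\<integral>x. \<bar>v (j - k) x - w (j - k) x\<bar> \<partial>\<mu>)"
      by (rule L1_contract) (use v[OF j'] w[OF j'] in auto)
    also have "\<dots> \<le> \<delta>" by (rule c[OF j'])
    finally show ?thesis .
  qed
qed

lemma prof_L1_LP:
  fixes v w :: "nat \<Rightarrow> (nat \<Rightarrow> nat) \<Rightarrow> real"
  assumes v: "\<And>j. j < k \<Longrightarrow> v j \<in> borel_measurable \<mu> \<and> (\<forall>x\<in>V. \<bar>v j x\<bar> \<le> 1)"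
      and w: "\<And>j. j < k \<Longrightarrow> w j \<in> borel_measurable \<mu> \<and> (\<forall>x\<in>V. \<bar>w j x\<bar> \<le> 1)"
      and c: "\<And>j. j < k \<Longrightarrow> (\<integral>x. \<bar>v j x - w j x\<bar> \<partial>\<mu>) \<le> \<delta>"
      and r: "0 < r" "2 * k * \<delta> \<le> r\<^sup>2"
  shows "LP_dist k (distr \<mu> (Rspace k) (prof k v A)) (distr \<mu> (Rspace k) (prof k w A)) \<le> r"
proof -
  have pv: "prof k v A \<in> measurable \<mu> (Rspace k)" by (rule prof_meas_inf) (use v in auto)
  have pw: "prof k w A \<in> measurable \<mu> (Rspace k)" by (rule prof_meas_inf) (use w in auto)
  note cI = prof_comp_L1(1)[OF v w c] and cB = prof_comp_L1(2)[OF v w c]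
  have sI: "integrable \<mu> (\<lambda>x. \<Sum>j<2*k. \<bar>prof k v A x j - prof k w A x j\<bar>)"
    by (rule Bochner_Integration.integrable_sum) (use cI in auto)
  have eI: "integrable \<mu> (\<lambda>x. edist k (prof k v A x) (prof k w A x))"
  proof (rule Bochner_Integration.integrable_bound[OF sI])
    show "(\<lambda>x. edist k (prof k v A x) (prof k w A x)) \<in> borel_measurable \<mu>" by (rule edist_meas2[OF pv pw])
    show "AE x in \<mu>. norm (edist k (prof k v A x) (prof k w A x)) \<le> norm (\<Sum>j<2*k. \<bar>prof k v A x j - prof k w A x j\<bar>)"
      using edist_le_sum edist_nonneg by (intro AE_I2) (simp add: sum_nonneg)
  qed
  show ?thesis
  proof (rule L1_LP[OF mu_prob pv pw eI _ r(1)])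
    have "(\<integral>x. edist k (prof k v A x) (prof k w A x) \<partial>\<mu>) \<le> (\<integral>x. (\<Sum>j<2*k. \<bar>prof k v A x j - prof k w A x j\<bar>) \<partial>\<mu>)"
      by (rule integral_mono[OF eI sI]) (rule edist_le_sum)
    also have "\<dots> = (\<Sum>j<2*k. (\<integral>x. \<bar>prof k v A x j - prof k w A x j\<bar> \<partial>\<mu>))"
      by (rule Bochner_Integration.integral_sum) (use cI in auto)
    also have "\<dots> \<le> (\<Sum>j<2*k. \<delta>)" by (rule sum_mono) (use cB in auto)
    also have "\<dots> = 2 * k * \<delta>" by simp
    finally show "(\<integral>x. edist k (prof k v A x) (prof k w A x) \<partial>\<mu>) \<le> 2 * k * \<delta>" .
  qed (use r in auto)
qed

lemma pointwise_approx:
  assumes P: "P \<in> Sinf k" and e: "0 < \<epsilon>"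
  shows "\<exists>N. \<forall>i\<ge>N. \<exists>Q\<in>Sfin i k. LP_dist k P Q \<le> \<epsilon>"
proof -
  obtain v where Pv: "P = distr \<mu> (Rspace k) (prof k v A)"
    and v0: "\<forall>j<k. v j \<in> borel_measurable \<mu> \<and> (\<forall>x\<in>space \<mu>. -1 \<le> v j x \<and> v j x \<le> 1)"
    using P unfolding Sinf_def S_k_alt by auto
  have v: "v j \<in> borel_measurable \<mu> \<and> (\<forall>x\<in>V. \<bar>v j x\<bar> \<le> 1)" if "j < k" for j
    using v0 that mu_space by (auto simp: abs_le_iff)
  define \<delta> where "\<delta> = \<epsilon>\<^sup>2 / (2 * real k + 1)"
  have d: "0 < \<delta>" unfolding \<delta>_def using e by simp
  have "\<forall>j. \<exists>J. j < k \<longrightarrow> (\<forall>i\<ge>J. \<exists>u. (\<forall>c. \<bar>u c\<bar> \<le> 1) \<and> (\<integral>x. \<bar>v j x - u (x i)\<bar> \<partial>\<mu>) < \<delta>)"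
    using func_approx[OF _ _ d] v by blast
  then obtain J where J: "\<And>j i. j < k \<Longrightarrow> J j \<le> i \<Longrightarrow> \<exists>u. (\<forall>c. \<bar>u c\<bar> \<le> 1) \<and> (\<integral>x. \<bar>v j x - u (x i)\<bar> \<partial>\<mu>) < \<delta>"
    by metis
  show ?thesis
  proof (intro exI[of _ "\<Sum>j<k. J j"] allI impI)
    fix i assume i: "(\<Sum>j<k. J j) \<le> i"
    have "\<forall>j. \<exists>u. j < k \<longrightarrow> (\<forall>c. \<bar>u c\<bar> \<le> 1) \<and> (\<integral>x. \<bar>v j x - u (x i)\<bar> \<partial>\<mu>) < \<delta>"
    proof
      fix j show "\<exists>u. j < k \<longrightarrow> (\<forall>c. \<bar>u c\<bar> \<le> 1) \<and> (\<integral>x. \<bar>v j x - u (x i)\<bar> \<partial>\<mu>) < \<delta>"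
      proof (cases "j < k")
        case True
        then have "J j \<le> (\<Sum>j<k. J j)" by (intro member_le_sum) auto
        then show ?thesis using J[OF True] i by auto
      qed simp
    qed
    then obtain u where u: "\<And>j. j < k \<Longrightarrow> (\<forall>c. \<bar>u j c\<bar> \<le> 1) \<and> (\<integral>x. \<bar>v j x - u j (x i)\<bar> \<partial>\<mu>) < \<delta>"
      by metis
    define w where "w j x = u j (x i)" for j x
    have w: "w j \<in> borel_measurable \<mu> \<and> (\<forall>x\<in>V. \<bar>w j x\<bar> \<le> 1)" if "j < k" for j
      unfolding w_def using u[OF that] by (auto intro: coord_fun_meas)
    have ub: "\<forall>j<k. \<forall>c<n i. \<bar>u j c\<bar> \<le> 1" using u by auto
    have cond: "\<forall>j<k. u j \<in> borel_measurable (Mi i) \<and> (\<forall>x\<in>space (Mi i). -1 \<le> u j x \<and> u j x \<le> 1)"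
      using u by (auto intro: Mi_meas simp: abs_le_iff)
    have Qin: "distr (Mi i) (Rspace k) (prof k u (Bi i)) \<in> Sfin i k"
      unfolding Sfin_def S_k_alt using cond by blast
    have eqQ: "distr \<mu> (Rspace k) (prof k w A) = distr (Mi i) (Rspace k) (prof k u (Bi i))"
      using pullback(1)[OF ub] unfolding w_def by simp
    have "LP_dist k P (distr \<mu> (Rspace k) (prof k w A)) \<le> \<epsilon>"
      unfolding Pv
    proof (rule prof_L1_LP[OF v w, where \<delta>=\<delta>])
      show "(\<integral>x. \<bar>v j x - w j x\<bar> \<partial>\<mu>) \<le> \<delta>" if "j < k" for j
        using u[OF that] unfolding w_def by simp
      show "0 < \<epsilon>" by (rule e)
      show "real (2 * k) * \<delta> \<le> \<epsilon>\<^sup>2"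
        unfolding \<delta>_def using e by (simp add: field_simps)
    qed
    then show "\<exists>Q\<in>Sfin i k. LP_dist k P Q \<le> \<epsilon>" using Qin eqQ by auto
  qed
qed

lemma uniform_approx:
  assumes e: "0 < \<epsilon>"
  shows "\<exists>N. \<forall>i\<ge>N. \<forall>P\<in>Sinf k. \<exists>Q\<in>Sfin i k. LP_dist k P Q \<le> \<epsilon>"
proof -
  obtain K and g :: "(nat \<Rightarrow> real) measure \<Rightarrow> (nat \<Rightarrow> nat) \<Rightarrow> int" where K: "finite K" and gK: "\<forall>P. good k P \<longrightarrow> g P \<in> K"
    and gLP: "\<forall>P Q. good k P \<longrightarrow> good k Q \<longrightarrow> measure P (cube k) = 1 \<longrightarrow> measure Q (cube k) = 1 \<longrightarrow>
        g P = g Q \<longrightarrow> LP_dist k P Q \<le> \<epsilon> / 2"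
  proof -
    have "0 < \<epsilon> / 2" using e by simp
    from total_bdd[OF this, of k] show ?thesis using that by blast
  qed
  define G where "G = g ` Sinf k"
  have finG: "finite G" unfolding G_def using K gK Sinf_good by (metis finite_subset image_subsetI)
  define rep where "rep \<kappa> = (SOME P. P \<in> Sinf k \<and> g P = \<kappa>)" for \<kappa>
  have rep: "rep \<kappa> \<in> Sinf k \<and> g (rep \<kappa>) = \<kappa>" if "\<kappa> \<in> G" for \<kappa>
    unfolding rep_def by (rule someI_ex) (use that G_def in auto)
  have "\<forall>\<kappa>. \<exists>N. \<kappa> \<in> G \<longrightarrow> (\<forall>i\<ge>N. \<exists>Q\<in>Sfin i k. LP_dist k (rep \<kappa>) Q \<le> \<epsilon> / 2)"
    using pointwise_approx rep e by (metis half_gt_zero)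
  then obtain NN where NN: "\<And>\<kappa> i. \<kappa> \<in> G \<Longrightarrow> NN \<kappa> \<le> i \<Longrightarrow> \<exists>Q\<in>Sfin i k. LP_dist k (rep \<kappa>) Q \<le> \<epsilon> / 2"
    by metis
  show ?thesis
  proof (intro exI[of _ "\<Sum>\<kappa>\<in>G. NN \<kappa>"] allI impI ballI)
    fix i P assume i: "(\<Sum>\<kappa>\<in>G. NN \<kappa>) \<le> i" and P: "P \<in> Sinf k"
    let ?\<kappa> = "g P"
    have kG: "?\<kappa> \<in> G" unfolding G_def using P by simp
    have "NN ?\<kappa> \<le> (\<Sum>\<kappa>\<in>G. NN \<kappa>)" by (rule member_le_sum[OF kG]) (use finG in auto)
    then have "NN ?\<kappa> \<le> i" using i by linarith
    then obtain Q where Q: "Q \<in> Sfin i k" "LP_dist k (rep ?\<kappa>) Q \<le> \<epsilon> / 2" using NN[OF kG] by blast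
    have R: "rep ?\<kappa> \<in> Sinf k" "g (rep ?\<kappa>) = ?\<kappa>" using rep[OF kG] by auto
    have gP: "good k P" "measure P (cube k) = 1" using Sinf_good[OF P] by auto
    have gR: "good k (rep ?\<kappa>)" "measure (rep ?\<kappa>) (cube k) = 1" using Sinf_good[OF R(1)] by auto
    have gQ: "good k Q" using Sfin_good[OF Q(1)] by auto
    have "LP_dist k P (rep ?\<kappa>) \<le> \<epsilon> / 2" using gLP gP gR R(2) by metis
    then have "LP_dist k P Q \<le> \<epsilon> / 2 + \<epsilon> / 2"
      using LP_triangle[OF gP(1) gR(1) gQ] Q(2) by linarith
    then show "\<exists>Q\<in>Sfin i k. LP_dist k P Q \<le> \<epsilon>" using Q(1) by auto
  qed
qed

end

lemma haus_le:
  assumes X: "X \<noteq> {}" and Y: "Y \<noteq> {}" and nn: "\<forall>P\<in>X. \<forall>Q\<in>Y. 0 \<le> LP_dist k P Q"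
    and XY: "\<forall>P\<in>X. \<exists>Q\<in>Y. LP_dist k P Q \<le> e" and YX: "\<forall>Q\<in>Y. \<exists>P\<in>X. LP_dist k P Q \<le> e"
  shows "haus_LP k X Y \<le> e"
proof -
  have 1: "(SUP P\<in>X. INF Q\<in>Y. LP_dist k P Q) \<le> e"
  proof (rule cSUP_least[OF X])
    fix P assume P: "P \<in> X"
    then obtain Q where Q: "Q \<in> Y" "LP_dist k P Q \<le> e" using XY by blast
    have "(INF Q\<in>Y. LP_dist k P Q) \<le> LP_dist k P Q"
      by (rule cINF_lower[OF _ Q(1)]) (use nn P in \<open>auto intro!: bdd_belowI2[where m=0]\<close>)
    then show "(INF Q\<in>Y. LP_dist k P Q) \<le> e" using Q by simp
  qed
  have 2: "(SUP Q\<in>Y. INF P\<in>X. LP_dist k P Q) \<le> e"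
  proof (rule cSUP_least[OF Y])
    fix Q assume Q: "Q \<in> Y"
    then obtain P where P: "P \<in> X" "LP_dist k P Q \<le> e" using YX by blast
    have "(INF P\<in>X. LP_dist k P Q) \<le> LP_dist k P Q"
      by (rule cINF_lower[OF _ P(1)]) (use nn Q in \<open>auto intro!: bdd_belowI2[where m=0]\<close>)
    then show "(INF P\<in>X. LP_dist k P Q) \<le> e" using P by simp
  qed
  show ?thesis unfolding haus_LP_def using 1 2 by simp
qed

lemma haus_nonneg:
  assumes X: "X \<noteq> {}" and Y: "Y \<noteq> {}" and nn: "\<forall>P\<in>X. \<forall>Q\<in>Y. 0 \<le> LP_dist k P Q \<and> LP_dist k P Q \<le> 1"
  shows "0 \<le> haus_LP k X Y"
proof -
  obtain P0 where P0: "P0 \<in> X" using X by blast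
  obtain Q0 where Q0: "Q0 \<in> Y" using Y by blast
  have i0: "0 \<le> (INF Q\<in>Y. LP_dist k P Q)" if P: "P \<in> X" for P
    by (rule cINF_greatest[OF Y]) (use nn P in auto)
  have i1: "(INF Q\<in>Y. LP_dist k P Q) \<le> 1" if P: "P \<in> X" for P
  proof -
    have "(INF Q\<in>Y. LP_dist k P Q) \<le> LP_dist k P Q0"
      by (rule cINF_lower[OF _ Q0]) (use nn P in \<open>auto intro!: bdd_belowI2[where m=0]\<close>)
    then show ?thesis using nn P Q0 by fastforce
  qed
  have "(INF Q\<in>Y. LP_dist k P0 Q) \<le> (SUP P\<in>X. INF Q\<in>Y. LP_dist k P Q)"
    by (rule cSUP_upper[OF P0]) (use i1 in \<open>auto intro!: bdd_aboveI2[where M=1]\<close>)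
  then have "0 \<le> (SUP P\<in>X. INF Q\<in>Y. LP_dist k P Q)" using i0[OF P0] by linarith
  then show ?thesis unfolding haus_LP_def by simp
qed

lemma haus_le1:
  assumes X: "X \<noteq> {}" and Y: "Y \<noteq> {}" and nn: "\<forall>P\<in>X. \<forall>Q\<in>Y. 0 \<le> LP_dist k P Q \<and> LP_dist k P Q \<le> 1"
  shows "haus_LP k X Y \<le> 1"
  by (rule haus_le[OF X Y]) (use nn X Y in \<open>fastforce+\<close>)

context towerL begin

lemma Sfin_ne: "Sfin i k \<noteq> {}"
proof -
  have "distr (Mi i) (Rspace k) (prof k (\<lambda>j x. 0) (Bi i)) \<in> Sfin i k"
    unfolding Sfin_def S_k_alt by (auto intro!: Mi_meas)
  then show ?thesis by blast
qed

lemma Sinf_ne: "Sinf k \<noteq> {}"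
  using Sfin_ne[of 0 k] Sfin_sub by blast

lemma LP_bounds:
  assumes "good k P" "good k Q"
  shows "0 \<le> LP_dist k P Q \<and> LP_dist k P Q \<le> 1"
  using LP_nonneg[OF assms] LP_le1[OF assms] by simp

lemma haus_fin_inf:
  assumes e: "0 < \<epsilon>"
  shows "\<exists>N. \<forall>i\<ge>N. haus_LP k (Sfin i k) (Sinf k) \<le> \<epsilon>"
proof -
  obtain N where N: "\<forall>i\<ge>N. \<forall>P\<in>Sinf k. \<exists>Q\<in>Sfin i k. LP_dist k P Q \<le> \<epsilon>"
    using uniform_approx[OF e] by blast
  show ?thesis
  proof (intro exI[of _ N] allI impI)
    fix i assume i: "N \<le> i"
    show "haus_LP k (Sfin i k) (Sinf k) \<le> \<epsilon>"
    proof (rule haus_le[OF Sfin_ne Sinf_ne])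
      show "\<forall>P\<in>Sfin i k. \<forall>Q\<in>Sinf k. 0 \<le> LP_dist k P Q"
        using LP_nonneg Sfin_good Sinf_good by blast
      show "\<forall>P\<in>Sfin i k. \<exists>Q\<in>Sinf k. LP_dist k P Q \<le> \<epsilon>"
        using Sfin_sub LP_self Sfin_good e by (metis less_imp_le subsetD)
      show "\<forall>Q\<in>Sinf k. \<exists>P\<in>Sfin i k. LP_dist k P Q \<le> \<epsilon>"
        using N i LP_sym by metis
    qed
  qed
qed

lemma haus_fin_inf_bounds: "0 \<le> haus_LP k (Sfin i k) (Sinf k) \<and> haus_LP k (Sfin i k) (Sinf k) \<le> 1"
proof -
  have "\<forall>P\<in>Sfin i k. \<forall>Q\<in>Sinf k. 0 \<le> LP_dist k P Q \<and> LP_dist k P Q \<le> 1"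
    using LP_bounds Sfin_good Sinf_good by blast
  then show ?thesis using haus_nonneg[OF Sfin_ne Sinf_ne] haus_le1[OF Sfin_ne Sinf_ne] by blast
qed

lemma action_conv: "action_convergent Mi Bi"
  unfolding action_convergent_def
proof (intro allI impI)
  fix k :: nat and e :: real assume e: "0 < e"
  obtain N where N: "\<forall>i\<ge>N. \<forall>P\<in>Sinf k. \<exists>Q\<in>Sfin i k. LP_dist k P Q \<le> e / 2"
    using uniform_approx[of "e/2" k] e by auto
  show "\<exists>N. \<forall>p\<ge>N. \<forall>q\<ge>N. haus_LP k (S_k (Mi p) (Bi p) k) (S_k (Mi q) (Bi q) k) < e"
  proof (intro exI[of _ N] allI impI)
    fix p q assume p: "N \<le> p" and q: "N \<le> q"
    have "haus_LP k (Sfin p k) (Sfin q k) \<le> e / 2"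
    proof (rule haus_le[OF Sfin_ne Sfin_ne])
      show "\<forall>P\<in>Sfin p k. \<forall>Q\<in>Sfin q k. 0 \<le> LP_dist k P Q"
        using LP_nonneg Sfin_good by blast
      show "\<forall>P\<in>Sfin p k. \<exists>Q\<in>Sfin q k. LP_dist k P Q \<le> e / 2"
        using N q Sfin_sub by blast
      show "\<forall>Q\<in>Sfin q k. \<exists>P\<in>Sfin p k. LP_dist k P Q \<le> e / 2"
        using N p Sfin_sub LP_sym by (metis subsetD)
    qed
    then show "haus_LP k (S_k (Mi p) (Bi p) k) (S_k (Mi q) (Bi q) k) < e"
      using e unfolding Sfin_def by simp
  qed
qed

lemma dM_lim: "(\<lambda>i. d_M (Mi i) (Bi i) \<mu> A) \<longlonglongrightarrow> 0"
proof -
  define a where "a k i = (1/2::real) ^ Suc k * haus_LP (Suc k) (Sfin i (Suc k)) (Sinf (Suc k))" for k i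
  have lim: "(\<lambda>i. a k i) \<longlonglongrightarrow> 0" for k
  proof -
    have "(\<lambda>i. haus_LP (Suc k) (Sfin i (Suc k)) (Sinf (Suc k))) \<longlonglongrightarrow> 0"
    proof (rule LIMSEQ_I)
      fix r :: real assume r: "0 < r"
      obtain N where N: "\<forall>i\<ge>N. haus_LP (Suc k) (Sfin i (Suc k)) (Sinf (Suc k)) \<le> r / 2"
        using haus_fin_inf[of "r/2" "Suc k"] r by auto
      show "\<exists>N. \<forall>i\<ge>N. norm (haus_LP (Suc k) (Sfin i (Suc k)) (Sinf (Suc k)) - 0) < r"
        using N haus_fin_inf_bounds r by (intro exI[of _ N]) force
    qed
    then show ?thesis unfolding a_def by (intro tendsto_mult_right_zero)
  qed
  have "eventually (\<lambda>(k, i). norm (a k i) \<le> (1/2) ^ Suc k) (at_top \<times>\<^sub>F sequentially)"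
  proof (intro always_eventually allI)
    fix p :: "nat \<times> nat"
    obtain k i where p: "p = (k, i)" by force
    have "0 \<le> haus_LP (Suc k) (Sfin i (Suc k)) (Sinf (Suc k))" "haus_LP (Suc k) (Sfin i (Suc k)) (Sinf (Suc k)) \<le> 1"
      using haus_fin_inf_bounds by auto
    then show "case p of (k, i) \<Rightarrow> norm (a k i) \<le> (1/2) ^ Suc k"
      unfolding p a_def by (simp add: mult_left_le)
  qed
  moreover have "summable (\<lambda>k. (1/2::real) ^ Suc k)" by simp
  ultimately have "((\<lambda>i. suminf (\<lambda>k. a k i)) \<longlongrightarrow> suminf (\<lambda>k. 0::real)) sequentially"
    using tannerys_theorem[of a "\<lambda>_. 0" sequentially "\<lambda>k. (1/2) ^ Suc k"] lim by auto
  moreover have "d_M (Mi i) (Bi i) \<mu> A = suminf (\<lambda>k. a k i)" for i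
    unfolding d_M_def a_def Sfin_def Sinf_def ..
  ultimately show ?thesis by simp
qed

lemma adj_lin: "adj_op m F dd (\<lambda>y. \<alpha> * g y + \<beta> * h y) x = \<alpha> * adj_op m F dd g x + \<beta> * adj_op m F dd h x"
  unfolding adj_op_def by (simp add: sum.distrib sum_distrib_left[symmetric] add_divide_distrib)

lemma P_op: "P_operator (Mi i) (Bi i)"
  unfolding P_operator_def
proof (intro conjI allI impI exI[of _ 1])
  fix g h :: "nat \<Rightarrow> real" and \<alpha> \<beta> :: real
  show "AE x in Mi i. Bi i (\<lambda>y. \<alpha> * g y + \<beta> * h y) x = \<alpha> * Bi i g x + \<beta> * Bi i h x"
    by (intro AE_I2) (rule adj_lin)
next
  fix g :: "nat \<Rightarrow> real" assume g: "\<forall>x\<in>space (Mi i). \<bar>g x\<bar> \<le> 1"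
  interpret P: prob_space "Mi i" by (rule Mi_prob)
  have gb: "\<forall>c<n i. \<bar>g c\<bar> \<le> 1" using g space_Mi by auto
  have bd: "AE x in Mi i. norm (Bi i g x) \<le> 1"
    using adj_bound[OF gb] space_Mi by (intro AE_I2) auto
  show "integrable (Mi i) (Bi i g)"
    by (rule P.integrable_const_bound[OF bd]) (rule Mi_meas, simp)
  then have "(\<integral>x. \<bar>Bi i g x\<bar> \<partial>Mi i) \<le> (\<integral>x. 1 \<partial>Mi i)"
    using adj_bound[OF gb] space_Mi by (intro integral_mono) auto
  then show "(\<integral>x. \<bar>Bi i g x\<bar> \<partial>Mi i) \<le> 1" using P.prob_space by simp
qed

end

theorem theorem12p4:
  fixes n :: "nat \<Rightarrow> nat" and E :: "nat \<Rightarrow> nat \<Rightarrow> nat \<Rightarrow> bool"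
    and f :: "nat \<Rightarrow> nat \<Rightarrow> nat" and a b d :: "nat \<Rightarrow> nat"
    and \<mu> :: "(nat \<Rightarrow> nat) measure"
    and \<nu> :: "(nat \<Rightarrow> nat) \<Rightarrow> (nat \<Rightarrow> nat) measure"
  assumes n_pos: "\<And>i. 0 < n i"
    and graphs: "\<And>i. fin_graph (n i) (E i)"
    and tower: "\<And>i. uniform_map (n i) (E i) (n (Suc i)) (E (Suc i)) (f i) (a i) (b i)"
    and reg: "\<And>i. regular (n i) (E i) (d i)"
    and d_pos: "\<And>i. 0 < d i"
    and mu_prob: "prob_space \<mu>"
    and mu_sets: "sets \<mu> = sets (inv_limit_borel n f)"
    and mu_space: "space \<mu> = inv_limit n f"
    and mu_proj: "\<And>i. distr \<mu> (count_space {..<n i}) (\<lambda>x. x i) = uniform_count_measure {..<n i}"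
    and nu_prob: "\<And>x. x \<in> inv_limit n f \<Longrightarrow> prob_space (\<nu> x)"
    and nu_sets: "\<And>x. x \<in> inv_limit n f \<Longrightarrow> sets (\<nu> x) = sets (inv_limit_borel n f)"
    and nu_space: "\<And>x. x \<in> inv_limit n f \<Longrightarrow> space (\<nu> x) = inv_limit n f"
    and nu_supp: "\<And>x. x \<in> inv_limit n f \<Longrightarrow> emeasure (\<nu> x) (inv_limit_nbrs n E f x) = 1"
    and nu_proj: "\<And>x i. x \<in> inv_limit n f \<Longrightarrow>
       distr (\<nu> x) (count_space {..<n i}) (\<lambda>y. y i) = uniform_measure (count_space {..<n i}) (nbrs (n i) (E i) (x i))"
  shows "(\<forall>i. P_operator (uniform_count_measure {..<n i}) (adj_op (n i) (E i) (d i)))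
       \<and> action_convergent (\<lambda>i. uniform_count_measure {..<n i}) (\<lambda>i. adj_op (n i) (E i) (d i))
       \<and> (\<lambda>i. d_M (uniform_count_measure {..<n i}) (adj_op (n i) (E i) (d i)) \<mu> (tower_op \<nu>))
            \<longlonglongrightarrow> 0"
proof -
  interpret T: towerL n E f a b d \<mu> \<nu>
    by (rule towerL.intro) (fact n_pos graphs tower reg d_pos mu_prob mu_sets mu_space mu_proj nu_prob nu_sets nu_space nu_supp nu_proj)+
  show ?thesis using T.P_op T.action_conv T.dM_lim by simp
qed


end
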